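(* Let $k_0\subset k\subset K$, where $K/k$ is a finite totally ramified Galois extension of complete discrete valuation fields with group $G$ and $k/k_0$ is a finite totally ramified extension; put $e_0=[K:k_0]$. I. Let $B\subset K[G]\setminus\{0\}$ be a finite $k_0$-graded independent set. 1. Let $c:B\to k_0$ be not identically zero and $m=\min\{v(c_b)+d(b): c_b\ne0\}$. Then $d(\sum_bc_bb)=m$ and $\mathfrak p(\sum_bc_bb)=\sum_b\lambda_b\mathfrak p(b)$, the sum over $b$ with $c_b\ne0$ and $v(c_b)+d(b)=m$, for some nonzero $\lambda_b\in\bar k$. 2. For every $i\in\mathbb Z$, $\mathfrak C_i\cap\big(\bigoplus_{b\in B}k_0\cdot b\big)=\bigoplus_{b\in B}\pi_0^{\lfloor(i-d-d(b)-1)/e_0\rfloor+1}O_{k_0}\cdot b$. II. For every $k_0$-vector subspace $L\subset K[G]$ there exists a $k_0$-graded independent set $B\subset L$ with $L=\bigoplus_{b\in B}k_0\cdot b$.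
   Context: $O_{k_0}$ is the ring of integers of $k_0$, $\pi_0$ a uniformizer of $k_0$, $\bar k$ the residue field of $K$, $r:O_K\to\bar k$ reduction, $v$ the valuation of $K$ with $v(K^* )=\mathbb Z$, $\pi$ a uniformizer of $K$, $n=[K:k]$, $d=v(\mathfrak D_{K/k})-n+1$, $c_\pi=\mathrm{Tr}_{K/k}(\pi^{-d})\in O_k^*$, $R=\bar k[X]/(X^n-1)$. $f=\sum a_\sigma\sigma\in K[G]$ acts by $f(x)=\sum a_\sigma\sigma(x)$; $\mathfrak C_i=\{f\in K[G]: v(f(x))-v(x)\ge i\ \forall x\in K^*\}$; for $f\in\mathfrak C_i$, $p_i(f)=r(c_\pi)^{-1}\sum_{j=0}^{n-1}r(f(\pi^{j-i})/\pi^j)X^j$; for $f\ne0$, $d(f)=i$ iff $f\in\mathfrak C_{i+d}\setminus\mathfrak C_{i+d+1}$, $\mathfrak p(f)=p_{d(f)+d}(f)$. For $B\subset K[G]\setminus\{0\}$, $B^0_s=\{f\in B: d(f)\equiv s\bmod e_0\}$; $B$ is $k_0$-graded independent if for every $s$ the family $(\mathfrak p(b))_{b\in B^0_s}$ is $\bar k$-linearly independent. *)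

theory Defs
  imports "HOL-Computational_Algebra.Polynomial" "HOL-Library.Function_Algebras"
begin

definition is_subfield :: "'a::field set \<Rightarrow> bool" where
  "is_subfield F \<longleftrightarrow> 0 \<in> F \<and> 1 \<in> F \<and> (\<forall>x\<in>F. \<forall>y\<in>F. x + y \<in> F \<and> x * y \<in> F)
     \<and> (\<forall>x\<in>F. - x \<in> F \<and> inverse x \<in> F)"

definition fam_indep :: "'s::zero set \<Rightarrow> ('s \<Rightarrow> 'v \<Rightarrow> 'v) \<Rightarrow> 'i set \<Rightarrow> ('i \<Rightarrow> 'v::comm_monoid_add) \<Rightarrow> bool" where
  "fam_indep F sm I x \<longleftrightarrow> (\<forall>T c. finite T \<and> T \<subseteq> I \<and> (\<forall>t\<in>T. c t \<in> F)
      \<and> (\<Sum>t\<in>T. sm (c t) (x t)) = 0 \<longrightarrow> (\<forall>t\<in>T. c t = 0))"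

definition fam_span :: "'s set \<Rightarrow> ('s \<Rightarrow> 'v \<Rightarrow> 'v) \<Rightarrow> 'i set \<Rightarrow> ('i \<Rightarrow> 'v::comm_monoid_add) \<Rightarrow> 'v set" where
  "fam_span F sm I x = {(\<Sum>t\<in>T. sm (c t) (x t)) | T c. finite T \<and> T \<subseteq> I \<and> (\<forall>t\<in>T. c t \<in> F)}"

definition is_subspace :: "'s set \<Rightarrow> ('s \<Rightarrow> 'v \<Rightarrow> 'v) \<Rightarrow> 'v::comm_monoid_add set \<Rightarrow> bool" where
  "is_subspace F sm L \<longleftrightarrow> 0 \<in> L \<and> (\<forall>x\<in>L. \<forall>y\<in>L. x + y \<in> L) \<and> (\<forall>c\<in>F. \<forall>x\<in>L. sm c x \<in> L)"

definition is_ext_deg :: "'a::field set \<Rightarrow> 'a set \<Rightarrow> nat \<Rightarrow> bool" where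
  "is_ext_deg F E n \<longleftrightarrow> (\<exists>Bs. finite Bs \<and> card Bs = n \<and> Bs \<subseteq> E \<and> fam_indep F (*) Bs id
      \<and> fam_span F (*) Bs id = E)"

definition ext_deg :: "'a::field set \<Rightarrow> 'a set \<Rightarrow> nat" where
  "ext_deg F E = (THE n. is_ext_deg F E n)"

text \<open>Normalized discrete valuation v with v(K^*) = Z; the value at 0 is irrelevant (never used).\<close>
definition discrete_val :: "('a::field \<Rightarrow> int) \<Rightarrow> bool" where
  "discrete_val v \<longleftrightarrow> (\<forall>x y. x \<noteq> 0 \<and> y \<noteq> 0 \<longrightarrow> v (x * y) = v x + v y)
     \<and> (\<forall>x y. x \<noteq> 0 \<and> y \<noteq> 0 \<and> x + y \<noteq> 0 \<longrightarrow> v (x + y) \<ge> min (v x) (v y))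
     \<and> (\<forall>z. \<exists>x. x \<noteq> 0 \<and> v x = z)"

definition vclose :: "('a::field \<Rightarrow> int) \<Rightarrow> int \<Rightarrow> 'a \<Rightarrow> 'a \<Rightarrow> bool" where
  "vclose v N x y \<longleftrightarrow> x = y \<or> v (x - y) \<ge> N"

definition v_complete :: "('a::field \<Rightarrow> int) \<Rightarrow> 'a set \<Rightarrow> bool" where
  "v_complete v F \<longleftrightarrow> (\<forall>s::nat \<Rightarrow> 'a. (\<forall>j. s j \<in> F) \<and> (\<forall>N. \<exists>M. \<forall>i\<ge>M. \<forall>j\<ge>M. vclose v N (s i) (s j))
      \<longrightarrow> (\<exists>l\<in>F. \<forall>N. \<exists>M. \<forall>j\<ge>M. vclose v N (s j) l))"

definition val_ring :: "('a::field \<Rightarrow> int) \<Rightarrow> 'a set" where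
  "val_ring v = {x. x = 0 \<or> v x \<ge> 0}"

definition is_residue_map :: "('a::field \<Rightarrow> int) \<Rightarrow> ('a \<Rightarrow> 'r::field) \<Rightarrow> bool" where
  "is_residue_map v r \<longleftrightarrow> (\<forall>x\<in>val_ring v. \<forall>y\<in>val_ring v. r (x + y) = r x + r y \<and> r (x * y) = r x * r y)
     \<and> r 1 = 1 \<and> (\<forall>z. \<exists>x\<in>val_ring v. r x = z)
     \<and> (\<forall>x\<in>val_ring v. r x = 0 \<longleftrightarrow> (x = 0 \<or> v x \<ge> 1))"

definition galois_group :: "'a::field set \<Rightarrow> ('a \<Rightarrow> 'a) set" where
  "galois_group k = {\<sigma>. bij \<sigma> \<and> (\<forall>x y. \<sigma> (x + y) = \<sigma> x + \<sigma> y \<and> \<sigma> (x * y) = \<sigma> x * \<sigma> y)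
      \<and> (\<forall>x\<in>k. \<sigma> x = x)}"

definition trace :: "('a \<Rightarrow> 'a) set \<Rightarrow> 'a::field \<Rightarrow> 'a" where
  "trace G x = (\<Sum>\<sigma>\<in>G. \<sigma> x)"

text \<open>Inverse different {x. Tr(x O_K) \<subseteq> O_k}; v(D) is the delta with codifferent = pi^(-delta) O_K.\<close>
definition codifferent :: "('a::field \<Rightarrow> int) \<Rightarrow> ('a \<Rightarrow> 'a) set \<Rightarrow> 'a set \<Rightarrow> 'a set" where
  "codifferent v G k = {x. \<forall>y\<in>val_ring v. trace G (x * y) \<in> val_ring v \<inter> k}"

definition diff_val :: "('a::field \<Rightarrow> int) \<Rightarrow> ('a \<Rightarrow> 'a) set \<Rightarrow> 'a set \<Rightarrow> int" where
  "diff_val v G k = (THE \<delta>. \<forall>x. x \<in> codifferent v G k \<longleftrightarrow> (x = 0 \<or> v x \<ge> - \<delta>))"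

text \<open>Elements of K[G]: functions G \<rightarrow> K (zero outside G).\<close>
definition inKG :: "('a \<Rightarrow> 'a) set \<Rightarrow> (('a \<Rightarrow> 'a) \<Rightarrow> 'a::field) \<Rightarrow> bool" where
  "inKG G f \<longleftrightarrow> (\<forall>\<sigma>. \<sigma> \<notin> G \<longrightarrow> f \<sigma> = 0)"

definition act :: "('a \<Rightarrow> 'a) set \<Rightarrow> (('a \<Rightarrow> 'a) \<Rightarrow> 'a::field) \<Rightarrow> 'a \<Rightarrow> 'a" where
  "act G f x = (\<Sum>\<sigma>\<in>G. f \<sigma> * \<sigma> x)"

definition kg_smult :: "'a::field \<Rightarrow> (('a \<Rightarrow> 'a) \<Rightarrow> 'a) \<Rightarrow> (('a \<Rightarrow> 'a) \<Rightarrow> 'a)" where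
  "kg_smult c f = (\<lambda>\<sigma>. c * f \<sigma>)"

definition Cset :: "('a::field \<Rightarrow> int) \<Rightarrow> ('a \<Rightarrow> 'a) set \<Rightarrow> int \<Rightarrow> (('a \<Rightarrow> 'a) \<Rightarrow> 'a) set" where
  "Cset v G i = {f. inKG G f \<and> (\<forall>x. x \<noteq> 0 \<longrightarrow> act G f x = 0 \<or> v (act G f x) - v x \<ge> i)}"

text \<open>p_i(f) in R = kbar[X]/(X^n-1), represented by its unique representative of degree < n.\<close>
definition pmap :: "('a \<Rightarrow> 'a) set \<Rightarrow> ('a::field \<Rightarrow> 'r::field) \<Rightarrow> nat \<Rightarrow> 'a \<Rightarrow> 'a \<Rightarrow> int
    \<Rightarrow> (('a \<Rightarrow> 'a) \<Rightarrow> 'a) \<Rightarrow> 'r poly" where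
  "pmap G r n \<pi> c\<pi> i f = smult (inverse (r c\<pi>))
      (\<Sum>j<n. monom (r (act G f (\<pi> powi (int j - i)) / \<pi> ^ j)) j)"

definition dval :: "('a::field \<Rightarrow> int) \<Rightarrow> ('a \<Rightarrow> 'a) set \<Rightarrow> int \<Rightarrow> (('a \<Rightarrow> 'a) \<Rightarrow> 'a) \<Rightarrow> int" where
  "dval v G dd f = (THE i. f \<in> Cset v G (i + dd) \<and> f \<notin> Cset v G (i + dd + 1))"

definition frakp :: "('a::field \<Rightarrow> int) \<Rightarrow> ('a \<Rightarrow> 'a) set \<Rightarrow> ('a \<Rightarrow> 'r::field) \<Rightarrow> nat \<Rightarrow> 'a \<Rightarrow> 'a \<Rightarrow> int
    \<Rightarrow> (('a \<Rightarrow> 'a) \<Rightarrow> 'a) \<Rightarrow> 'r poly" where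
  "frakp v G r n \<pi> c\<pi> dd f = pmap G r n \<pi> c\<pi> (dval v G dd f + dd) f"

definition graded_indep :: "('a::field \<Rightarrow> int) \<Rightarrow> ('a \<Rightarrow> 'a) set \<Rightarrow> ('a \<Rightarrow> 'r::field) \<Rightarrow> nat \<Rightarrow> 'a \<Rightarrow> 'a
    \<Rightarrow> int \<Rightarrow> nat \<Rightarrow> (('a \<Rightarrow> 'a) \<Rightarrow> 'a) set \<Rightarrow> bool" where
  "graded_indep v G r n \<pi> c\<pi> dd e0 B \<longleftrightarrow> B \<subseteq> {f. inKG G f \<and> f \<noteq> 0}
     \<and> (\<forall>s::int. fam_indep UNIV smult {b\<in>B. dval v G dd b mod int e0 = s mod int e0} (frakp v G r n \<pi> c\<pi> dd))"

end

theory Submission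
  imports Defs
begin

lemma subf_0: "is_subfield F \<Longrightarrow> 0 \<in> F" by (simp add: is_subfield_def)
lemma subf_1: "is_subfield F \<Longrightarrow> 1 \<in> F" by (simp add: is_subfield_def)
lemma subf_add: "is_subfield F \<Longrightarrow> x \<in> F \<Longrightarrow> y \<in> F \<Longrightarrow> x + y \<in> F" by (simp add: is_subfield_def)
lemma subf_mult: "is_subfield F \<Longrightarrow> x \<in> F \<Longrightarrow> y \<in> F \<Longrightarrow> x * y \<in> F" by (simp add: is_subfield_def)
lemma subf_uminus: "is_subfield F \<Longrightarrow> x \<in> F \<Longrightarrow> - x \<in> F" by (simp add: is_subfield_def)
lemma subf_inverse: "is_subfield F \<Longrightarrow> x \<in> F \<Longrightarrow> inverse x \<in> F" by (simp add: is_subfield_def)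
lemma subf_diff: "is_subfield F \<Longrightarrow> x \<in> F \<Longrightarrow> y \<in> F \<Longrightarrow> x - y \<in> F"
  by (metis diff_conv_add_uminus subf_add subf_uminus)
lemma subf_divide: "is_subfield F \<Longrightarrow> x \<in> F \<Longrightarrow> y \<in> F \<Longrightarrow> x / y \<in> F"
  by (metis divide_inverse subf_mult subf_inverse)
lemma subf_sum: "is_subfield F \<Longrightarrow> (\<And>i. i \<in> T \<Longrightarrow> f i \<in> F) \<Longrightarrow> sum f T \<in> F"
  by (induction T rule: infinite_finite_induct) (auto simp: subf_0 subf_add)
lemma subf_power: "is_subfield F \<Longrightarrow> x \<in> F \<Longrightarrow> x ^ m \<in> F"
  by (induction m) (auto simp: subf_1 subf_mult)
lemma subf_powi: "is_subfield F \<Longrightarrow> x \<in> F \<Longrightarrow> x powi m \<in> F"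
  by (simp add: power_int_def subf_power subf_inverse)
lemma subf_UNIV: "is_subfield (UNIV :: 'a::field set)" by (simp add: is_subfield_def)

section \<open>Valuations\<close>

definition vg :: "('a::field \<Rightarrow> int) \<Rightarrow> 'a \<Rightarrow> int \<Rightarrow> bool" where
  "vg v x N \<longleftrightarrow> x = 0 \<or> v x \<ge> N"

locale dvf =
  fixes v :: "'a::field \<Rightarrow> int"
  assumes dv: "discrete_val v"
begin

lemma v_mult: "x \<noteq> 0 \<Longrightarrow> y \<noteq> 0 \<Longrightarrow> v (x * y) = v x + v y"
  using dv by (simp add: discrete_val_def)

lemma v_add: "x \<noteq> 0 \<Longrightarrow> y \<noteq> 0 \<Longrightarrow> x + y \<noteq> 0 \<Longrightarrow> v (x + y) \<ge> min (v x) (v y)"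
  using dv by (simp add: discrete_val_def)

lemma v_surj: "\<exists>x. x \<noteq> 0 \<and> v x = z"
  using dv by (simp add: discrete_val_def)

lemma v_one[simp]: "v 1 = 0"
  using v_mult[of 1 1] by simp

lemma v_inverse: "x \<noteq> 0 \<Longrightarrow> v (inverse x) = - v x"
  using v_mult[of x "inverse x"] by simp

lemma v_divide: "x \<noteq> 0 \<Longrightarrow> y \<noteq> 0 \<Longrightarrow> v (x / y) = v x - v y"
  by (simp add: divide_inverse v_mult v_inverse)

lemma v_minus_one[simp]: "v (-1) = 0"
  using v_mult[of "-1" "-1"] by simp

lemma v_uminus[simp]: "v (- x) = v x"
proof (cases "x = 0")
  case False
  then show ?thesis using v_mult[of "-1" x] by simp
qed simp

lemma v_power: "x \<noteq> 0 \<Longrightarrow> v (x ^ m) = int m * v x"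
  by (induction m) (auto simp: v_mult algebra_simps)

lemma v_powi: "x \<noteq> 0 \<Longrightarrow> v (x powi m) = m * v x"
  by (cases "m \<ge> 0") (auto simp: power_int_def v_power v_inverse)

lemma vg_0[simp]: "vg v 0 N" by (simp add: vg_def)

lemma vg_mono: "vg v x N \<Longrightarrow> M \<le> N \<Longrightarrow> vg v x M"
  by (auto simp: vg_def)

lemma vg_add: "vg v x N \<Longrightarrow> vg v y N \<Longrightarrow> vg v (x + y) N"
proof -
  assume a: "vg v x N" "vg v y N"
  show ?thesis
  proof (cases "x = 0 \<or> y = 0 \<or> x + y = 0")
    case True
    then show ?thesis using a by (auto simp: vg_def)
  next
    case False
    then have "v (x + y) \<ge> min (v x) (v y)" using v_add[of x y] by blast
    moreover have "N \<le> v x" "N \<le> v y" using a False by (auto simp: vg_def)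
    ultimately show ?thesis unfolding vg_def by linarith
  qed
qed

lemma vg_uminus[simp]: "vg v (- x) N = vg v x N"
  by (simp add: vg_def)

lemma vg_diff: "vg v x N \<Longrightarrow> vg v y N \<Longrightarrow> vg v (x - y) N"
  by (metis diff_conv_add_uminus vg_add vg_uminus)

lemma vg_sum: "(\<And>i. i \<in> T \<Longrightarrow> vg v (g i) N) \<Longrightarrow> vg v (sum g T) N"
  by (induction T rule: infinite_finite_induct) (auto intro: vg_add)

lemma vg_mult: "vg v x N \<Longrightarrow> vg v y M \<Longrightarrow> vg v (x * y) (N + M)"
  by (metis add_mono mult_eq_0_iff v_mult vg_def)

lemma vg_mult_iff: "y \<noteq> 0 \<Longrightarrow> vg v (x * y) N \<longleftrightarrow> vg v x (N - v y)"
proof -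
  assume y: "y \<noteq> 0"
  show ?thesis
  proof (cases "x = 0")
    case False
    then show ?thesis using y v_mult[of x y] unfolding vg_def by auto
  qed (simp add: vg_def)
qed

lemma vg_v: "vg v x (v x)" by (simp add: vg_def)

lemma strict_add: "x \<noteq> 0 \<Longrightarrow> vg v y (v x + 1) \<Longrightarrow> x + y \<noteq> 0 \<and> v (x + y) = v x"
proof -
  assume x: "x \<noteq> 0" and y: "vg v y (v x + 1)"
  show ?thesis
  proof (cases "y = 0")
    case False
    with y have vy: "v y > v x" by (simp add: vg_def)
    have ne: "x + y \<noteq> 0"
    proof
      assume "x + y = 0"
      then have "y = - x" by (simp add: eq_neg_iff_add_eq_0 add.commute)
      with vy show False by simp
    qed
    have "v (x + y) \<ge> v x" using v_add[OF x False ne] vy by simp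
    moreover have "v x \<ge> min (v (x + y)) (v y)"
      using v_add[of "x + y" "- y"] ne False x by simp
    ultimately show ?thesis using ne vy by auto
  qed (use x in simp)
qed

lemma vg_iff_le: "x \<noteq> 0 \<Longrightarrow> vg v x N \<longleftrightarrow> N \<le> v x" by (simp add: vg_def)

lemma sum_distinct_val:
  assumes fin: "finite T" and ne: "T \<noteq> {}" and nz: "\<And>i. i \<in> T \<Longrightarrow> g i \<noteq> 0"
    and inj: "inj_on (\<lambda>i. v (g i)) T"
  shows "sum g T \<noteq> 0 \<and> v (sum g T) = Min ((\<lambda>i. v (g i)) ` T)"
proof -
  define m where "m = Min ((\<lambda>i. v (g i)) ` T)"
  have "m \<in> (\<lambda>i. v (g i)) ` T" unfolding m_def using fin ne by simp
  then obtain i0 where i0: "i0 \<in> T" "v (g i0) = m" by auto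
  have lt: "v (g i) \<ge> m + 1" if "i \<in> T - {i0}" for i
  proof -
    have "v (g i) \<ge> m" unfolding m_def using fin that by simp
    moreover have "v (g i) \<noteq> m" using inj i0 that by (auto simp: inj_on_def)
    ultimately show ?thesis by simp
  qed
  have e: "sum g T = g i0 + sum g (T - {i0})" using fin i0(1) by (simp add: sum.remove)
  have "vg v (sum g (T - {i0})) (v (g i0) + 1)"
    using lt i0 by (intro vg_sum) (simp add: vg_def)
  then have "g i0 + sum g (T - {i0}) \<noteq> 0 \<and> v (g i0 + sum g (T - {i0})) = v (g i0)"
    using strict_add[of "g i0"] nz[OF i0(1)] by blast
  then show ?thesis unfolding e using i0(2) m_def by simp
qed

end

section \<open>Linear algebra over a subfield\<close>

locale fmod =
  fixes F :: "'s::field set" and sm :: "'s \<Rightarrow> 'v::ab_group_add \<Rightarrow> 'v"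
  assumes subF: "is_subfield F"
    and add_sm: "a \<in> F \<Longrightarrow> b \<in> F \<Longrightarrow> sm (a + b) x = sm a x + sm b x"
    and sm_add: "a \<in> F \<Longrightarrow> sm a (x + y) = sm a x + sm a y"
    and sm_mult: "a \<in> F \<Longrightarrow> b \<in> F \<Longrightarrow> sm (a * b) x = sm a (sm b x)"
    and sm_one: "sm 1 x = x"
begin

lemma F0: "0 \<in> F" and F1: "1 \<in> F" using subF by (auto simp: subf_0 subf_1)

lemma sm_zero_left[simp]: "sm 0 x = 0"
  using add_sm[OF F0 F0, of x] by simp

lemma sm_zero_right: "a \<in> F \<Longrightarrow> sm a 0 = 0"
  using sm_add[of a 0 0] by simp

lemma sm_minus_left: "a \<in> F \<Longrightarrow> sm (- a) x = - sm a x"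
proof -
  assume a: "a \<in> F"
  have "sm a x + sm (- a) x = 0" using add_sm[of a "-a" x] subF a by (simp add: subf_uminus)
  then show ?thesis by (metis neg_eq_iff_add_eq_0)
qed

lemma sm_diff_left: "a \<in> F \<Longrightarrow> b \<in> F \<Longrightarrow> sm (a - b) x = sm a x - sm b x"
  using add_sm[of a "-b" x] subF by (simp add: subf_uminus sm_minus_left)

lemma sm_minus_right: "a \<in> F \<Longrightarrow> sm a (- x) = - sm a x"
proof -
  assume a: "a \<in> F"
  have "sm a x + sm a (- x) = 0" using sm_add[of a x "-x"] a by (simp add: sm_zero_right)
  then show ?thesis by (metis neg_eq_iff_add_eq_0)
qed

lemma sm_diff_right: "a \<in> F \<Longrightarrow> sm a (x - y) = sm a x - sm a y"
  using sm_add[of a x "-y"] by (simp add: sm_minus_right)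

lemma sm_sum: "a \<in> F \<Longrightarrow> sm a (sum g T) = (\<Sum>t\<in>T. sm a (g t))"
  by (induction T rule: infinite_finite_induct) (auto simp: sm_zero_right sm_add)

lemma sum_sm: "(\<And>t. t \<in> T \<Longrightarrow> c t \<in> F) \<Longrightarrow> sm (sum c T) x = (\<Sum>t\<in>T. sm (c t) x)"
proof (induction T rule: infinite_finite_induct)
  case (insert t T)
  then show ?case using add_sm[of "c t" "sum c T" x] subF by (simp add: subf_sum)
qed auto

lemma span_repr:
  assumes "finite T"
  shows "x \<in> fam_span F sm T y \<longleftrightarrow> (\<exists>a. (\<forall>u\<in>T. a u \<in> F) \<and> x = (\<Sum>u\<in>T. sm (a u) (y u)))"
proof
  assume "x \<in> fam_span F sm T y"
  then obtain T0 c where T0: "finite T0" "T0 \<subseteq> T" "\<forall>t\<in>T0. c t \<in> F" "x = (\<Sum>t\<in>T0. sm (c t) (y t))"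
    unfolding fam_span_def by blast
  define a where "a = (\<lambda>u. if u \<in> T0 then c u else 0)"
  have "(\<Sum>u\<in>T. sm (a u) (y u)) = (\<Sum>u\<in>T0. sm (a u) (y u))"
    using T0 assms by (intro sum.mono_neutral_right) (auto simp: a_def)
  also have "\<dots> = x" using T0 by (simp add: a_def)
  finally show "\<exists>a. (\<forall>u\<in>T. a u \<in> F) \<and> x = (\<Sum>u\<in>T. sm (a u) (y u))"
    using T0 F0 by (intro exI[of _ a]) (auto simp: a_def)
next
  assume "\<exists>a. (\<forall>u\<in>T. a u \<in> F) \<and> x = (\<Sum>u\<in>T. sm (a u) (y u))"
  then show "x \<in> fam_span F sm T y" using assms unfolding fam_span_def by blast
qed

lemma span_intro: "finite T0 \<Longrightarrow> T0 \<subseteq> T \<Longrightarrow> \<forall>t\<in>T0. c t \<in> F \<Longrightarrow>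
   x = (\<Sum>t\<in>T0. sm (c t) (y t)) \<Longrightarrow> x \<in> fam_span F sm T y"
  unfolding fam_span_def by blast

lemma span_zero: "0 \<in> fam_span F sm T y"
  unfolding fam_span_def by (rule CollectI, rule exI[of _ "{}"]) auto

lemma span_add: "x \<in> fam_span F sm T y \<Longrightarrow> z \<in> fam_span F sm T y \<Longrightarrow> x + z \<in> fam_span F sm T y"
proof -
  assume "x \<in> fam_span F sm T y" "z \<in> fam_span F sm T y"
  then obtain T1 c1 T2 c2 where 1: "finite T1" "T1 \<subseteq> T" "\<forall>t\<in>T1. c1 t \<in> F" "x = (\<Sum>t\<in>T1. sm (c1 t) (y t))"
    and 2: "finite T2" "T2 \<subseteq> T" "\<forall>t\<in>T2. c2 t \<in> F" "z = (\<Sum>t\<in>T2. sm (c2 t) (y t))"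
    unfolding fam_span_def by blast
  define a1 where "a1 = (\<lambda>u. if u \<in> T1 then c1 u else 0)"
  define a2 where "a2 = (\<lambda>u. if u \<in> T2 then c2 u else 0)"
  have fin: "finite (T1 \<union> T2)" using 1 2 by simp
  have "x = (\<Sum>u\<in>T1 \<union> T2. sm (a1 u) (y u))"
    using 1 fin by (subst sum.mono_neutral_right[of "T1 \<union> T2" T1]) (auto simp: a1_def)
  moreover have "z = (\<Sum>u\<in>T1 \<union> T2. sm (a2 u) (y u))"
    using 2 fin by (subst sum.mono_neutral_right[of "T1 \<union> T2" T2]) (auto simp: a2_def)
  ultimately have "x + z = (\<Sum>u\<in>T1 \<union> T2. sm (a1 u + a2 u) (y u))"
    using 1 2 F0 by (simp add: sum.distrib[symmetric] add_sm a1_def a2_def)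
  moreover have "\<forall>u\<in>T1 \<union> T2. a1 u + a2 u \<in> F"
    using 1 2 F0 subF by (auto simp: a1_def a2_def subf_add)
  ultimately show ?thesis using fin 1 2 by (intro span_intro) auto
qed

lemma span_smult: "a \<in> F \<Longrightarrow> x \<in> fam_span F sm T y \<Longrightarrow> sm a x \<in> fam_span F sm T y"
proof -
  assume a: "a \<in> F" and "x \<in> fam_span F sm T y"
  then obtain T1 c1 where 1: "finite T1" "T1 \<subseteq> T" "\<forall>t\<in>T1. c1 t \<in> F" "x = (\<Sum>t\<in>T1. sm (c1 t) (y t))"
    unfolding fam_span_def by blast
  have "sm a x = (\<Sum>t\<in>T1. sm (a * c1 t) (y t))"
    using 1 a by (simp add: sm_sum sm_mult)
  moreover have "\<forall>t\<in>T1. a * c1 t \<in> F" using 1 a subF by (simp add: subf_mult)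
  ultimately show ?thesis using 1 by (intro span_intro) auto
qed

lemma span_sum: "(\<And>i. i \<in> I \<Longrightarrow> g i \<in> fam_span F sm T y) \<Longrightarrow> sum g I \<in> fam_span F sm T y"
proof (induction I rule: infinite_finite_induct)
  case (insert i I)
  then show ?case using span_add[of "g i" T y "sum g I"] by simp
qed (simp_all add: span_zero)

lemma span_base: "t \<in> T \<Longrightarrow> y t \<in> fam_span F sm T y"
  using F1 by (intro span_intro[of "{t}" T "\<lambda>_. 1"]) (simp_all add: sm_one)

lemma span_mono: "T \<subseteq> T' \<Longrightarrow> fam_span F sm T y \<subseteq> fam_span F sm T' y"
proof
  fix x assume "T \<subseteq> T'" "x \<in> fam_span F sm T y"
  then obtain T1 c1 where 1: "finite T1" "T1 \<subseteq> T" "\<forall>t\<in>T1. c1 t \<in> F" "x = (\<Sum>t\<in>T1. sm (c1 t) (y t))"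
    unfolding fam_span_def by blast
  then show "x \<in> fam_span F sm T' y" using \<open>T \<subseteq> T'\<close> by (intro span_intro[of T1 T' c1]) auto
qed

lemma indep_mono: "S' \<subseteq> S \<Longrightarrow> fam_indep F sm S x \<Longrightarrow> fam_indep F sm S' x"
  unfolding fam_indep_def by (meson order_trans)

lemma indep_full:
  assumes "finite S"
    and "\<And>a. (\<forall>u\<in>S. a u \<in> F) \<Longrightarrow> (\<Sum>u\<in>S. sm (a u) (x u)) = 0 \<Longrightarrow> \<forall>u\<in>S. a u = 0"
  shows "fam_indep F sm S x"
  unfolding fam_indep_def
proof (intro allI impI)
  fix T c assume T: "finite T \<and> T \<subseteq> S \<and> (\<forall>t\<in>T. c t \<in> F) \<and> (\<Sum>t\<in>T. sm (c t) (x t)) = 0"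
  define a where "a = (\<lambda>u. if u \<in> T then c u else 0)"
  have "(\<Sum>u\<in>S. sm (a u) (x u)) = (\<Sum>u\<in>T. sm (a u) (x u))"
    using T assms(1) by (intro sum.mono_neutral_right) (auto simp: a_def)
  also have "\<dots> = 0" using T by (simp add: a_def)
  finally have az: "\<forall>u\<in>S. a u = 0" using assms(2)[of a] T F0 by (auto simp: a_def)
  show "\<forall>t\<in>T. c t = 0"
  proof
    fix t assume t: "t \<in> T"
    then have "a t = 0" using az T by blast
    then show "c t = 0" using t by (simp add: a_def)
  qed
qed

lemma indep_use:
  "fam_indep F sm S x \<Longrightarrow> finite T \<Longrightarrow> T \<subseteq> S \<Longrightarrow> (\<forall>t\<in>T. c t \<in> F) \<Longrightarrow>
    (\<Sum>t\<in>T. sm (c t) (x t)) = 0 \<Longrightarrow> t \<in> T \<Longrightarrow> c t = 0"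
  unfolding fam_indep_def by blast

lemma steinitz_fin:
  assumes "finite T"
  shows "finite S \<Longrightarrow> fam_indep F sm S x \<Longrightarrow> (\<forall>s\<in>S. x s \<in> fam_span F sm T y) \<Longrightarrow> card S \<le> card T"
  using assms
proof (induction T arbitrary: S x rule: finite_induct)
  case empty
  show ?case
  proof (cases "S = {}")
    case False
    then obtain s where s: "s \<in> S" by auto
    have "x s = 0" using empty.prems(3) s
      by (simp add: span_repr)
    then have "(1::'s) = 0"
      using indep_use[OF empty.prems(2), of "{s}" "\<lambda>_. 1" s] s F1 by (simp add: sm_one)
    then show ?thesis by simp
  qed simp
next
  case (insert t T' S x)
  have "\<forall>s\<in>S. \<exists>a. (\<forall>u\<in>insert t T'. a u \<in> F) \<and> x s = (\<Sum>u\<in>insert t T'. sm (a u) (y u))"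
    using insert.prems(3) insert.hyps by (simp add: span_repr[of "insert t T'"])
  then obtain a where a: "\<And>s. s \<in> S \<Longrightarrow> (\<forall>u\<in>insert t T'. a s u \<in> F) \<and>
        x s = (\<Sum>u\<in>insert t T'. sm (a s u) (y u))"
    by metis
  have xs: "x s = sm (a s t) (y t) + (\<Sum>u\<in>T'. sm (a s u) (y u))" if "s \<in> S" for s
    using a[OF that] insert.hyps by simp
  show ?case
  proof (cases "\<forall>s\<in>S. a s t = 0")
    case True
    have "\<forall>s\<in>S. x s \<in> fam_span F sm T' y"
    proof
      fix s assume s: "s \<in> S"
      have "x s = (\<Sum>u\<in>T'. sm (a s u) (y u))" using xs[OF s] True s by simp
      then show "x s \<in> fam_span F sm T' y" using a[OF s] insert.hyps
        by (subst span_repr) auto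
    qed
    then have "card S \<le> card T'" using insert by blast
    then show ?thesis using insert.hyps by simp
  next
    case False
    then obtain s0 where s0: "s0 \<in> S" "a s0 t \<noteq> 0" by auto
    define q where "q s = a s t / a s0 t" for s
    define x' where "x' s = x s - sm (q s) (x s0)" for s
    have qF: "q s \<in> F" if "s \<in> S" for s
      using a[OF that] a[OF s0(1)] subF unfolding q_def by (simp add: subf_divide)
    have "\<forall>s\<in>S - {s0}. x' s \<in> fam_span F sm T' y"
    proof
      fix s assume s: "s \<in> S - {s0}"
      have aF: "\<forall>u\<in>insert t T'. a s u \<in> F" "\<forall>u\<in>insert t T'. a s0 u \<in> F" using a s s0 by auto
      have "sm (q s) (x s0) = sm (q s * a s0 t) (y t) + (\<Sum>u\<in>T'. sm (q s * a s0 u) (y u))"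
        using xs[OF s0(1)] qF s aF by (simp add: sm_add sm_sum sm_mult)
      also have "q s * a s0 t = a s t" using s0 by (simp add: q_def)
      finally have "x' s = (\<Sum>u\<in>T'. sm (a s u) (y u)) - (\<Sum>u\<in>T'. sm (q s * a s0 u) (y u))"
        unfolding x'_def using xs s by simp
      also have "\<dots> = (\<Sum>u\<in>T'. sm (a s u - q s * a s0 u) (y u))"
        using aF qF s subF by (simp add: sum_subtractf[symmetric] sm_diff_left subf_mult)
      finally have "\<exists>a. (\<forall>u\<in>T'. a u \<in> F) \<and> x' s = (\<Sum>u\<in>T'. sm (a u) (y u))"
        using aF qF s subF
        by (intro exI[of _ "\<lambda>u. a s u - q s * a s0 u"]) (auto intro!: subf_diff subf_mult)
      then show "x' s \<in> fam_span F sm T' y"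
        using span_repr[OF insert.hyps(1)] by blast
    qed
    moreover have "fam_indep F sm (S - {s0}) x'"
      unfolding fam_indep_def
    proof (intro allI impI)
      fix T c assume T: "finite T \<and> T \<subseteq> S - {s0} \<and> (\<forall>t\<in>T. c t \<in> F) \<and> (\<Sum>t\<in>T. sm (c t) (x' t)) = 0"
      define c' where "c' s = (if s = s0 then - (\<Sum>u\<in>T. c u * q u) else c s)" for s
      have s0T: "s0 \<notin> T" using T by auto
      have cF: "\<forall>u\<in>insert s0 T. c' u \<in> F"
        using T qF subF s0T by (auto simp: c'_def intro!: subf_uminus subf_sum subf_mult)
      have "(\<Sum>t\<in>T. sm (c t) (x' t)) = (\<Sum>t\<in>T. sm (c t) (x t)) - (\<Sum>t\<in>T. sm (c t * q t) (x s0))"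
        using T qF by (auto simp: x'_def sm_diff_right sm_mult sum_subtractf intro!: sum.cong)
      also have "(\<Sum>t\<in>T. sm (c t * q t) (x s0)) = sm (\<Sum>u\<in>T. c u * q u) (x s0)"
        using T qF subF by (subst sum_sm) (auto intro: subf_mult)
      moreover have "(\<Sum>u\<in>T. sm (c' u) (x u)) = (\<Sum>u\<in>T. sm (c u) (x u))"
        using s0T by (intro sum.cong) (auto simp: c'_def)
      moreover have sF: "(\<Sum>u\<in>T. c u * q u) \<in> F"
        using T qF subF by (auto intro!: subf_sum subf_mult)
      ultimately have "(\<Sum>u\<in>insert s0 T. sm (c' u) (x u)) = 0"
        using T s0T cF subF sm_minus_left[OF sF]
        by (simp add: c'_def sm_minus_left subf_sum subf_mult qF)
      then have "\<forall>u\<in>insert s0 T. c' u = 0"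
        using indep_use[OF insert.prems(2), of "insert s0 T" c'] T s0 cF by auto
      then show "\<forall>t\<in>T. c t = 0" using s0T by (auto simp: c'_def split: if_splits)
    qed
    ultimately have "card (S - {s0}) \<le> card T'"
      using insert.IH[of "S - {s0}" x'] insert.prems by blast
    then show ?thesis using insert.hyps s0 insert.prems(1)
      by (simp add: card_Diff_singleton)
  qed
qed

lemma steinitz:
  assumes ind: "fam_indep F sm S x" and fin: "finite T" and sp: "\<forall>s\<in>S. x s \<in> fam_span F sm T y"
  shows "finite S \<and> card S \<le> card T"
proof -
  have "finite S"
  proof (rule ccontr)
    assume "infinite S"
    then obtain S' where S': "S' \<subseteq> S" "finite S'" "card S' = Suc (card T)"
      by (meson infinite_arbitrarily_large)
    then have "card S' \<le> card T" using steinitz_fin[OF fin S'(2)] indep_mono[OF S'(1) ind] sp by blast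
    then show False using S' by simp
  qed
  then show ?thesis using steinitz_fin[OF fin _ ind] sp by blast
qed

lemma indep_insert:
  assumes ind: "fam_indep F sm S x" and nsp: "x t \<notin> fam_span F sm S x" and tS: "t \<notin> S"
  shows "fam_indep F sm (insert t S) x"
  unfolding fam_indep_def
proof (intro allI impI)
  fix T c assume T: "finite T \<and> T \<subseteq> insert t S \<and> (\<forall>t\<in>T. c t \<in> F) \<and> (\<Sum>t\<in>T. sm (c t) (x t)) = 0"
  show "\<forall>u\<in>T. c u = 0"
  proof (cases "t \<in> T")
    case False
    then show ?thesis using T ind unfolding fam_indep_def by blast
  next
    case True
    have ct: "c t = 0"
    proof (rule ccontr)
      assume ne: "c t \<noteq> 0"
      have "(\<Sum>u\<in>T. sm (c u) (x u)) = sm (c t) (x t) + (\<Sum>u\<in>T - {t}. sm (c u) (x u))"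
        using T True by (intro sum.remove) auto
      then have "sm (c t) (x t) + (\<Sum>u\<in>T - {t}. sm (c u) (x u)) = 0"
        using T by simp
      then have "sm (c t) (x t) = - (\<Sum>u\<in>T - {t}. sm (c u) (x u))"
        by (simp add: eq_neg_iff_add_eq_0)
      then have "sm (inverse (c t)) (sm (c t) (x t)) = (\<Sum>u\<in>T - {t}. sm (- (inverse (c t) * c u)) (x u))"
        using T True subF by (simp add: sm_minus_right sm_sum sm_mult sm_minus_left subf_inverse subf_mult
            sum_negf)
      moreover have "sm (inverse (c t)) (sm (c t) (x t)) = x t"
        using T True subF ne by (simp add: sm_mult[symmetric] subf_inverse sm_one)
      ultimately have "x t \<in> fam_span F sm S x"
        using T True subF unfolding fam_span_def
        by (intro CollectI exI[of _ "T - {t}"] exI[of _ "\<lambda>u. - (inverse (c t) * c u)"])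
          (auto intro!: subf_uminus subf_mult subf_inverse)
      then show False using nsp by simp
    qed
    have "(\<Sum>u\<in>T. sm (c u) (x u)) = sm (c t) (x t) + (\<Sum>u\<in>T - {t}. sm (c u) (x u))"
      using T True by (intro sum.remove) auto
    then have "(\<Sum>u\<in>T - {t}. sm (c u) (x u)) = 0" using T ct by simp
    then have "\<forall>u\<in>T - {t}. c u = 0" using T ind unfolding fam_indep_def by blast
    then show ?thesis using ct by auto
  qed
qed

lemma span_self: "S \<subseteq> fam_span F sm S id"
  using span_base[of _ S id] by auto

lemma full_span:
  assumes fS: "finite S" and ind: "fam_indep F sm S id" and fT: "finite T"
    and card: "card T \<le> card S" and V: "V \<subseteq> fam_span F sm T y" and SV: "S \<subseteq> V"
  shows "V \<subseteq> fam_span F sm S id"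
proof
  fix w assume w: "w \<in> V"
  show "w \<in> fam_span F sm S id"
  proof (rule ccontr)
    assume nw: "w \<notin> fam_span F sm S id"
    then have wS: "w \<notin> S" using span_self by auto
    have "fam_indep F sm (insert w S) id" using indep_insert[OF ind _ wS] nw by simp
    moreover have "\<forall>s\<in>insert w S. id s \<in> fam_span F sm T y" using V SV w by auto
    ultimately have "card (insert w S) \<le> card T" using steinitz[OF _ fT] by blast
    then show False using card wS fS by simp
  qed
qed

end

lemma fmod_mult: "is_subfield F \<Longrightarrow> fmod F ((*) :: 'a::field \<Rightarrow> 'a \<Rightarrow> 'a)"
  by unfold_locales (simp_all add: algebra_simps)

lemma fmod_smult: "fmod (UNIV :: 'a::field set) smult"
  by unfold_locales (simp_all add: subf_UNIV smult_add_left smult_add_right)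

lemma ext_deg_unique:
  assumes F: "is_subfield F" and h: "is_ext_deg F E m"
  shows "ext_deg F E = m"
proof -
  interpret fmod F "(*)" by (rule fmod_mult[OF F])
  have uniq: "m' = m" if h': "is_ext_deg F E m'" for m'
  proof -
    obtain B where B: "finite B" "card B = m" "B \<subseteq> E" "fam_indep F (*) B id" "fam_span F (*) B id = E"
      using h unfolding is_ext_deg_def by blast
    obtain B' where B': "finite B'" "card B' = m'" "B' \<subseteq> E" "fam_indep F (*) B' id" "fam_span F (*) B' id = E"
      using h' unfolding is_ext_deg_def by blast
    have 1: "\<forall>s\<in>B. id s \<in> fam_span F (*) B' id" using B(3) B'(5) by (simp add: subset_iff)
    have 2: "card B \<le> card B'" using steinitz[OF B(4) B'(1) 1] by blast
    have 3: "\<forall>s\<in>B'. id s \<in> fam_span F (*) B id" using B'(3) B(5) by (simp add: subset_iff)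
    have 4: "card B' \<le> card B" using steinitz[OF B'(4) B(1) 3] by blast
    show ?thesis using 2 4 B(2) B'(2) by linarith
  qed
  show ?thesis unfolding ext_deg_def by (rule the_equality[where P = "is_ext_deg F E", OF h]) (rule uniq)
qed


lemma dvd_small_eq:
  fixes a b :: int and i j E :: nat
  assumes h: "a + int i = b + int j" "int E dvd a" "int E dvd b" "i < E" "j < E"
  shows "i = j"
proof -
  obtain qa where qa: "a = int E * qa" using h(2) by blast
  obtain qb where qb: "b = int E * qb" using h(3) by blast
  have eq: "int E * (qa - qb) = int j - int i" using h(1) qa qb by (simp add: algebra_simps)
  have "qa - qb = 0"
  proof (rule ccontr)
    assume ne: "qa - qb \<noteq> 0"
    show False
    proof (cases "qa - qb > 0")
      case True
      then have "int E * (qa - qb) \<ge> int E * 1" by (intro mult_left_mono) auto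
      then show False using eq h(4,5) by linarith
    next
      case False
      then have "qa - qb \<le> -1" using ne by linarith
      then have "int E * (qa - qb) \<le> int E * (-1)" by (intro mult_left_mono) auto
      then show False using eq h(4,5) by linarith
    qed
  qed
  then show ?thesis using eq by simp
qed

context dvf
begin

lemma pow_indep:
  assumes F: "is_subfield F" and E: "E > 0" and dvdv: "\<forall>a\<in>F - {0}. int E dvd v a"
    and p: "p \<noteq> 0" "v p = 1"
  shows "fam_indep F (*) {..<E} (\<lambda>i. p ^ i)"
proof -
  interpret fmod F "(*)" by (rule fmod_mult[OF F])
  show ?thesis
  proof (rule indep_full)
    fix a assume aF: "\<forall>u\<in>{..<E}. a u \<in> F" and s: "(\<Sum>u\<in>{..<E}. a u * p ^ u) = 0"
    define T where "T = {i\<in>{..<E}. a i \<noteq> 0}"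
    have sT: "(\<Sum>u\<in>T. a u * p ^ u) = 0"
      using s unfolding T_def by (subst sum.mono_neutral_left[of "{..<E}"]) auto
    show "\<forall>u\<in>{..<E}. a u = 0"
    proof (rule ccontr)
      assume "\<not> (\<forall>u\<in>{..<E}. a u = 0)"
      then have ne: "T \<noteq> {}" unfolding T_def by auto
      have nz: "\<And>i. i \<in> T \<Longrightarrow> a i * p ^ i \<noteq> 0" using p unfolding T_def by simp
      have vv: "v (a i * p ^ i) = v (a i) + int i" if "i \<in> T" for i
        using that p unfolding T_def by (simp add: v_mult v_power)
      have "inj_on (\<lambda>i. v (a i * p ^ i)) T"
      proof (rule inj_onI)
        fix i j assume ij: "i \<in> T" "j \<in> T" "v (a i * p ^ i) = v (a j * p ^ j)"
        then have "v (a i) + int i = v (a j) + int j" using vv by simp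
        moreover have "int E dvd v (a i)" "int E dvd v (a j)"
          using dvdv ij aF unfolding T_def by auto
        moreover have "i < E" "j < E" using ij unfolding T_def by auto
        ultimately show "i = j" by (rule dvd_small_eq)
      qed
      then show False using sum_distinct_val[of T "\<lambda>i. a i * p ^ i"] nz ne sT
        unfolding T_def by auto
    qed
  qed simp
qed

lemma expansion_vg:
  assumes F: "is_subfield F" and E: "E > 0" and dvdv: "\<forall>a\<in>F - {0}. int E dvd v a"
    and p: "p \<noteq> 0" "v p = 1" and aF: "\<forall>i<E. a i \<in> F"
  shows "vg v (\<Sum>i<E. a i * p ^ i) N \<longleftrightarrow> (\<forall>i<E. vg v (a i * p ^ i) N)"
proof
  assume h: "vg v (\<Sum>i<E. a i * p ^ i) N"
  define T where "T = {i\<in>{..<E}. a i \<noteq> 0}"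
  have sT: "(\<Sum>i<E. a i * p ^ i) = (\<Sum>u\<in>T. a u * p ^ u)"
    unfolding T_def by (subst sum.mono_neutral_left[of "{..<E}"]) auto
  show "\<forall>i<E. vg v (a i * p ^ i) N"
  proof (cases "T = {}")
    case True
    then show ?thesis unfolding T_def by auto
  next
    case False
    have nz: "\<And>i. i \<in> T \<Longrightarrow> a i * p ^ i \<noteq> 0" using p unfolding T_def by simp
    have vv: "v (a i * p ^ i) = v (a i) + int i" if "i \<in> T" for i
      using that p unfolding T_def by (simp add: v_mult v_power)
    have "inj_on (\<lambda>i. v (a i * p ^ i)) T"
    proof (rule inj_onI)
      fix i j assume ij: "i \<in> T" "j \<in> T" "v (a i * p ^ i) = v (a j * p ^ j)"
      then have "v (a i) + int i = v (a j) + int j" using vv by simp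
      moreover have "int E dvd v (a i)" "int E dvd v (a j)"
        using dvdv ij aF unfolding T_def by auto
      moreover have "i < E" "j < E" using ij unfolding T_def by auto
      ultimately show "i = j" by (rule dvd_small_eq)
    qed
    then have sd: "(\<Sum>u\<in>T. a u * p ^ u) \<noteq> 0 \<and> v (\<Sum>u\<in>T. a u * p ^ u) = Min ((\<lambda>i. v (a i * p ^ i)) ` T)"
      using sum_distinct_val[of T "\<lambda>i. a i * p ^ i"] nz False unfolding T_def by auto
    show ?thesis
    proof (intro allI impI)
      fix i assume i: "i < E"
      show "vg v (a i * p ^ i) N"
      proof (cases "i \<in> T")
        case True
        have "Min ((\<lambda>i. v (a i * p ^ i)) ` T) \<le> v (a i * p ^ i)"
          using True unfolding T_def by (intro Min_le) auto
        then show ?thesis using h sd sT True nz unfolding vg_def by auto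
      next
        case False
        then show ?thesis using i unfolding T_def by (simp add: vg_def)
      qed
    qed
  qed
next
  assume "\<forall>i<E. vg v (a i * p ^ i) N"
  then show "vg v (\<Sum>i<E. a i * p ^ i) N" by (intro vg_sum) auto
qed

lemma pw_basis:
  assumes F: "is_subfield F" and E: "E > 0" and dvdv: "\<forall>a\<in>F - {0}. int E dvd v a"
    and p: "p \<noteq> 0" "v p = 1"
    and T: "finite T" "card T \<le> E" "\<forall>x. x \<in> fam_span F (*) T y"
  shows "is_ext_deg F UNIV E" "card T = E"
    "\<forall>x. \<exists>a. (\<forall>i<E. a i \<in> F) \<and> x = (\<Sum>i<E. a i * p ^ i)"
proof -
  interpret fmod F "(*)" by (rule fmod_mult[OF F])
  define Pw where "Pw = (\<lambda>i. p ^ i) ` {..<E}"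
  have inj: "inj_on (\<lambda>i. p ^ i) {..<E}"
  proof (rule inj_onI)
    fix i j assume "p ^ i = p ^ j"
    then have "v (p ^ i) = v (p ^ j)" by simp
    then show "i = j" using p by (simp add: v_power)
  qed
  have fPw: "finite Pw" unfolding Pw_def by simp
  have cPw: "card Pw = E" unfolding Pw_def using card_image[OF inj] by simp
  have ind0: "fam_indep F (*) {..<E} (\<lambda>i. p ^ i)" by (rule pow_indep[OF F E dvdv p])
  have ind: "fam_indep F (*) Pw id"
    unfolding fam_indep_def
  proof (intro allI impI)
    fix S c assume S: "finite S \<and> S \<subseteq> Pw \<and> (\<forall>t\<in>S. c t \<in> F) \<and> (\<Sum>t\<in>S. c t * id t) = 0"
    define S' where "S' = {i\<in>{..<E}. p ^ i \<in> S}"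
    have SS': "S = (\<lambda>i. p ^ i) ` S'" using S unfolding S'_def Pw_def by auto
    have injS: "inj_on (\<lambda>i. p ^ i) S'" using inj unfolding S'_def by (auto simp: inj_on_def)
    have z: "(\<Sum>i\<in>S'. c (p ^ i) * p ^ i) = 0"
      using S sum.reindex[OF injS, of "\<lambda>t. c t * t"] SS' by simp
    have fS': "finite S'" "S' \<subseteq> {..<E}" unfolding S'_def by auto
    have cF: "\<forall>i\<in>S'. c (p ^ i) \<in> F" using S unfolding S'_def by auto
    have "\<forall>i\<in>S'. c (p ^ i) = 0"
      using indep_use[OF ind0 fS'(1) fS'(2), of "\<lambda>i. c (p ^ i)"] cF z by blast
    then show "\<forall>t\<in>S. c t = 0" using SS' by auto
  qed
  have sp: "UNIV \<subseteq> fam_span F (*) Pw id"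
  proof (rule full_span[of Pw T UNIV y])
    show "card T \<le> card Pw" using cPw T(2) by simp
    show "UNIV \<subseteq> fam_span F (*) T y" using T(3) by blast
  qed (use fPw ind T(1) in auto)
  have "\<forall>s\<in>Pw. id s \<in> fam_span F (*) T y" using T(3) by blast
  then have ct: "card Pw \<le> card T" using steinitz[OF ind T(1)] by blast
  show "card T = E" using ct T(2) cPw by simp
  show "is_ext_deg F UNIV E" unfolding is_ext_deg_def
    using sp ind cPw fPw by (intro exI[of _ Pw]) auto
  show "\<forall>x. \<exists>a. (\<forall>i<E. a i \<in> F) \<and> x = (\<Sum>i<E. a i * p ^ i)"
  proof
    fix x
    have "x \<in> fam_span F (*) Pw id" using sp by auto
    then obtain a where a: "\<forall>u\<in>Pw. a u \<in> F" "x = (\<Sum>u\<in>Pw. a u * u)"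
      using span_repr[OF fPw, of x id] by auto
    have "x = (\<Sum>i<E. a (p ^ i) * p ^ i)" using a(2) sum.reindex[OF inj, of "\<lambda>u. a u * u"]
      unfolding Pw_def by simp
    then show "\<exists>a. (\<forall>i<E. a i \<in> F) \<and> x = (\<Sum>i<E. a i * p ^ i)"
      using a(1) unfolding Pw_def by (intro exI[of _ "\<lambda>i. a (p ^ i)"]) auto
  qed
qed

end


locale setting = dvf v for v :: "'K::field \<Rightarrow> int" +
  fixes k k0 :: "'K set" and G :: "('K \<Rightarrow> 'K) set"
    and r :: "'K \<Rightarrow> 'r::field" and \<pi> \<pi>0 c\<pi> :: 'K and n e0 :: nat and d :: int
  assumes complK: "v_complete v UNIV"
    and sub_k: "is_subfield k" and sub_k0: "is_subfield k0" and k0k: "k0 \<subseteq> k"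
    and compl_k: "v_complete v k" and compl_k0: "v_complete v k0"
    and fin_Kk: "\<exists>m. is_ext_deg k UNIV m" and fin_kk0: "\<exists>m. is_ext_deg k0 k m"
    and n_def: "n = ext_deg k UNIV"
    and G_def: "G = galois_group k" and galois: "card G = n"
    and totram_Kk: "v ` (k - {0}) = {int n * z | z. True}"
    and totram_kk0: "v ` (k0 - {0}) = {int (ext_deg k0 k) * int n * z | z. True}"
    and e0_def: "e0 = ext_deg k0 UNIV"
    and res: "is_residue_map v r"
    and unif: "\<pi> \<noteq> 0" "v \<pi> = 1"
    and unif0: "\<pi>0 \<in> k0" "\<pi>0 \<noteq> 0" "v \<pi>0 > 0" "\<forall>x\<in>k0 - {0}. v x > 0 \<longrightarrow> v \<pi>0 \<le> v x"
    and d_def: "d = diff_val v G k - int n + 1"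
    and c\<pi>_def: "c\<pi> = trace G (\<pi> powi (- d))"
begin

lemma dvd_k: "\<forall>a\<in>k - {0}. int n dvd v a"
proof
  fix a assume "a \<in> k - {0}"
  then have "v a \<in> v ` (k - {0})" by blast
  then show "int n dvd v a" using totram_Kk by auto
qed

lemma basisK_all: "n > 0 \<and> (\<forall>x. \<exists>a. (\<forall>i<n. a i \<in> k) \<and> x = (\<Sum>i<n. a i * \<pi> ^ i))"
proof -
  interpret fmod k "(*)" by (rule fmod_mult[OF sub_k])
  obtain m where m: "is_ext_deg k UNIV m" using fin_Kk by blast
  have nm: "n = m" using ext_deg_unique[OF sub_k m] n_def by simp
  obtain B where B: "finite B" "card B = m" "fam_indep k (*) B id" "fam_span k (*) B id = UNIV"
    using m unfolding is_ext_deg_def by blast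
  have n0: "n > 0"
  proof (rule ccontr)
    assume "\<not> n > 0"
    then have "B = {}" using B nm by simp
    moreover have "(1::'K) \<in> fam_span k (*) B id" using B by simp
    ultimately show False using span_repr[of "{}" 1 id] by simp
  qed
  have "\<forall>x. \<exists>a. (\<forall>i<n. a i \<in> k) \<and> x = (\<Sum>i<n. a i * \<pi> ^ i)"
    by (rule pw_basis(3)[OF sub_k n0 dvd_k unif B(1)]) (use B nm in auto)
  then show ?thesis using n0 by blast
qed

lemma n_pos: "n > 0" using basisK_all by blast

lemma basisK: "\<exists>a. (\<forall>i<n. a i \<in> k) \<and> x = (\<Sum>i<n. a i * \<pi> ^ i)"
  using basisK_all by blast

lemma tower_all: "e0 = ext_deg k0 k * n \<and> e0 > 0 \<and> (\<forall>a\<in>k0 - {0}. int e0 dvd v a)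
   \<and> (\<forall>x. \<exists>a. (\<forall>i<e0. a i \<in> k0) \<and> x = (\<Sum>i<e0. a i * \<pi> ^ i))"
proof -
  interpret k0m: fmod k0 "(*)" by (rule fmod_mult[OF sub_k0])
  obtain m1 where m1: "is_ext_deg k0 k m1" using fin_kk0 by blast
  have m1e: "ext_deg k0 k = m1" using ext_deg_unique[OF sub_k0 m1] by simp
  obtain A where A: "finite A" "card A = m1" "A \<subseteq> k" "fam_indep k0 (*) A id" "fam_span k0 (*) A id = k"
    using m1 unfolding is_ext_deg_def by blast
  define E where "E = m1 * n"
  have dvd0: "\<forall>a\<in>k0 - {0}. int E dvd v a"
  proof
    fix a assume "a \<in> k0 - {0}"
    then have "v a \<in> v ` (k0 - {0})" by blast
    then show "int E dvd v a" using totram_kk0 m1e unfolding E_def by auto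
  qed
  have m1pos: "m1 > 0"
  proof (rule ccontr)
    assume "\<not> m1 > 0"
    then have "A = {}" using A by simp
    moreover have "(1::'K) \<in> fam_span k0 (*) A id" using A sub_k by (simp add: subf_1)
    ultimately show False using k0m.span_repr[of "{}" 1 id] by simp
  qed
  have Epos: "E > 0" using m1pos n_pos unfolding E_def by simp
  define y where "y = (\<lambda>(a::'K, i::nat). a * \<pi> ^ i)"
  have spanT: "\<forall>x. x \<in> fam_span k0 (*) (A \<times> {..<n}) y"
  proof
    fix x
    obtain b where b: "\<forall>i<n. b i \<in> k" "x = (\<Sum>i<n. b i * \<pi> ^ i)" using basisK by blast
    have "\<forall>i\<in>{..<n}. \<exists>c. (\<forall>u\<in>A. c u \<in> k0) \<and> b i = (\<Sum>u\<in>A. c u * u)"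
    proof
      fix i assume "i \<in> {..<n}"
      then have "b i \<in> fam_span k0 (*) A id" using b A by auto
      then show "\<exists>c. (\<forall>u\<in>A. c u \<in> k0) \<and> b i = (\<Sum>u\<in>A. c u * u)"
        using k0m.span_repr[OF A(1)] by simp
    qed
    then obtain c where c: "\<And>i. i \<in> {..<n} \<Longrightarrow> (\<forall>u\<in>A. c i u \<in> k0) \<and> b i = (\<Sum>u\<in>A. c i u * u)"
      by metis
    have "x = (\<Sum>i<n. \<Sum>u\<in>A. c i u * (u * \<pi> ^ i))"
      using b c by (simp add: sum_distrib_right mult.assoc)
    also have "\<dots> = (\<Sum>u\<in>A. \<Sum>i<n. c i u * (u * \<pi> ^ i))" by (rule sum.swap)
    also have "\<dots> = (\<Sum>q\<in>A \<times> {..<n}. (\<lambda>(u, i). c i u) q * y q)"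
      unfolding y_def by (subst sum.cartesian_product) (simp add: case_prod_beta)
    finally show "x \<in> fam_span k0 (*) (A \<times> {..<n}) y"
      using c A(1) by (subst k0m.span_repr) (auto intro!: exI[of _ "\<lambda>(u, i). c i u"])
  qed
  have cT: "card (A \<times> {..<n}) \<le> E" using A unfolding E_def by (simp add: card_cartesian_product)
  have h1: "is_ext_deg k0 UNIV E"
    by (rule pw_basis(1)[OF sub_k0 Epos dvd0 unif _ cT spanT]) (use A in simp)
  have h3: "\<forall>x. \<exists>a. (\<forall>i<E. a i \<in> k0) \<and> x = (\<Sum>i<E. a i * \<pi> ^ i)"
    by (rule pw_basis(3)[OF sub_k0 Epos dvd0 unif _ cT spanT]) (use A in simp)
  have "e0 = E" using ext_deg_unique[OF sub_k0 h1] e0_def by simp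
  then show ?thesis using h3 dvd0 Epos m1e unfolding E_def by simp
qed

lemma e0_pos: "e0 > 0" using tower_all by blast
lemma dvd_k0: "a \<in> k0 \<Longrightarrow> a \<noteq> 0 \<Longrightarrow> int e0 dvd v a" using tower_all by blast
lemma basisK0: "\<exists>a. (\<forall>i<e0. a i \<in> k0) \<and> x = (\<Sum>i<e0. a i * \<pi> ^ i)" using tower_all by blast

lemma n_dvd_e0: "n dvd e0" using tower_all by simp

lemma k0_sub_k: "a \<in> k0 \<Longrightarrow> a \<in> k" using k0k by blast

lemma vk0_range: "\<exists>a\<in>k0 - {0}. v a = int e0 * z"
proof -
  have "int (ext_deg k0 k) * int n * z \<in> v ` (k0 - {0})" using totram_kk0 by blast
  then show ?thesis using tower_all by auto
qed

lemma v_pi0: "v \<pi>0 = int e0"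
proof -
  obtain a where a: "a \<in> k0 - {0}" "v a = int e0" using vk0_range[of 1] by auto
  have "v \<pi>0 \<le> int e0" using unif0(4)[rule_format, of a] a e0_pos by simp
  moreover obtain q where "v \<pi>0 = int e0 * q" using dvd_k0[OF unif0(1,2)] by blast
  ultimately show ?thesis using unif0(3) e0_pos
    by (metis dual_order.antisym mult.right_neutral mult_le_cancel_left_pos of_nat_0_less_iff
        zero_less_mult_pos int_one_le_iff_zero_less)
qed

lemma lift_k0:
  assumes x: "vg v x 0"
  shows "\<exists>a\<in>k0. vg v a 0 \<and> vg v (x - a) 1"
proof -
  obtain a where a: "\<forall>i<e0. a i \<in> k0" "x = (\<Sum>i<e0. a i * \<pi> ^ i)" using basisK0 by blast
  have each: "\<forall>i<e0. vg v (a i * \<pi> ^ i) 0"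
    using expansion_vg[OF sub_k0 e0_pos _ unif a(1), of 0] x a(2) dvd_k0 by auto
  have a0: "vg v (a 0) 0" using each[rule_format, of 0] e0_pos by simp
  have hi: "vg v (a i * \<pi> ^ i) 1" if i: "1 \<le> i" "i < e0" for i
  proof (cases "a i = 0")
    case False
    have "v (a i * \<pi> ^ i) = v (a i) + int i" using False unif by (simp add: v_mult v_power)
    moreover have "v (a i * \<pi> ^ i) \<ge> 0" using each[rule_format, of i] i False unif by (simp add: vg_def)
    moreover obtain q where q: "v (a i) = int e0 * q" using dvd_k0[of "a i"] a i False by blast
    ultimately have "int e0 * q \<ge> - int i" by simp
    then have "int e0 * q > - int e0" using i by simp
    then have "q > -1" by (metis mult.right_neutral mult_minus_right mult_less_cancel_left_pos
          of_nat_0_less_iff e0_pos)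
    then have "q \<ge> 0" by simp
    then have "v (a i) \<ge> 0" using q by simp
    then show ?thesis using False unif i \<open>v (a i * \<pi> ^ i) = v (a i) + int i\<close> by (simp add: vg_def)
  qed simp
  have "x - a 0 = (\<Sum>i\<in>{1..<e0}. a i * \<pi> ^ i)"
  proof -
    have "{..<e0} = insert 0 {1..<e0}" using e0_pos by auto
    then show ?thesis using a(2) by simp
  qed
  then have "vg v (x - a 0) 1" using hi by (auto intro!: vg_sum)
  then show ?thesis using a0 a(1) e0_pos by blast
qed

end


lemma dedekind:
  fixes H :: "('a::field \<Rightarrow> 'a) set"
  assumes "finite H" and "\<forall>\<sigma>\<in>H. \<forall>x y. \<sigma> (x * y) = \<sigma> x * \<sigma> y" and "\<forall>\<sigma>\<in>H. \<sigma> 1 = 1"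
  shows "(\<forall>x. (\<Sum>\<sigma>\<in>H. c \<sigma> * \<sigma> x) = 0) \<Longrightarrow> \<forall>\<sigma>\<in>H. c \<sigma> = 0"
  using assms
proof (induction H arbitrary: c rule: finite_induct)
  case empty
  then show ?case by simp
next
  case (insert \<tau> H c)
  have R: "c \<tau> * \<tau> x + (\<Sum>\<sigma>\<in>H. c \<sigma> * \<sigma> x) = 0" for x
    using insert.prems(1) insert.hyps by simp
  have Hz: "\<forall>\<sigma>\<in>H. c \<sigma> = 0"
  proof
    fix \<sigma> assume \<sigma>: "\<sigma> \<in> H"
    have "\<sigma> \<noteq> \<tau>" using \<sigma> insert.hyps by auto
    then obtain y where y: "\<sigma> y \<noteq> \<tau> y" by (meson ext)
    have "(\<Sum>\<rho>\<in>H. (c \<rho> * (\<rho> y - \<tau> y)) * \<rho> x) = 0" for x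
    proof -
      have "(\<Sum>\<rho>\<in>H. (c \<rho> * (\<rho> y - \<tau> y)) * \<rho> x)
          = (\<Sum>\<rho>\<in>H. c \<rho> * \<rho> (y * x) - \<tau> y * (c \<rho> * \<rho> x))"
      proof (rule sum.cong)
        fix \<rho> assume "\<rho> \<in> H"
        then have "\<rho> (y * x) = \<rho> y * \<rho> x" using insert.prems(2) by blast
        then show "(c \<rho> * (\<rho> y - \<tau> y)) * \<rho> x = c \<rho> * \<rho> (y * x) - \<tau> y * (c \<rho> * \<rho> x)"
          by (simp add: algebra_simps)
      qed simp
      also have "\<dots> = (\<Sum>\<rho>\<in>H. c \<rho> * \<rho> (y * x)) - \<tau> y * (\<Sum>\<rho>\<in>H. c \<rho> * \<rho> x)"
        by (simp add: sum_subtractf sum_distrib_left)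
      also have "\<dots> = (- (c \<tau> * \<tau> (y * x))) - \<tau> y * (- (c \<tau> * \<tau> x))"
      proof -
        have "(\<Sum>\<rho>\<in>H. c \<rho> * \<rho> (y * x)) = - (c \<tau> * \<tau> (y * x))"
          using R[of "y * x"] by (metis add.commute eq_neg_iff_add_eq_0)
        moreover have "(\<Sum>\<rho>\<in>H. c \<rho> * \<rho> x) = - (c \<tau> * \<tau> x)"
          using R[of x] by (metis add.commute eq_neg_iff_add_eq_0)
        ultimately show ?thesis by simp
      qed
      also have "\<dots> = 0" using insert.prems(2) by (simp add: algebra_simps)
      finally show ?thesis .
    qed
    then have "\<forall>\<rho>\<in>H. c \<rho> * (\<rho> y - \<tau> y) = 0"
      using insert.IH[of "\<lambda>\<rho>. c \<rho> * (\<rho> y - \<tau> y)"] insert.prems by blast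
    then have "c \<sigma> * (\<sigma> y - \<tau> y) = 0" using \<sigma> by blast
    then show "c \<sigma> = 0" using y by simp
  qed
  have "c \<tau> * \<tau> 1 = 0" using R[of 1] Hz by simp
  then have "c \<tau> = 0" using insert.prems(3) by simp
  then show ?case using Hz by simp
qed

context setting
begin

lemma G_fin: "finite G" using galois n_pos by (metis card.infinite less_irrefl)

lemma G_mem: "\<sigma> \<in> G \<Longrightarrow> bij \<sigma> \<and> (\<forall>x y. \<sigma> (x + y) = \<sigma> x + \<sigma> y \<and> \<sigma> (x * y) = \<sigma> x * \<sigma> y) \<and> (\<forall>x\<in>k. \<sigma> x = x)"
  using G_def by (simp add: galois_group_def)

lemma G_add: "\<sigma> \<in> G \<Longrightarrow> \<sigma> (x + y) = \<sigma> x + \<sigma> y" using G_mem by blast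
lemma G_mult: "\<sigma> \<in> G \<Longrightarrow> \<sigma> (x * y) = \<sigma> x * \<sigma> y" using G_mem by blast
lemma G_fix: "\<sigma> \<in> G \<Longrightarrow> x \<in> k \<Longrightarrow> \<sigma> x = x" using G_mem by blast
lemma G_inj: "\<sigma> \<in> G \<Longrightarrow> inj \<sigma>" using G_mem bij_is_inj by blast
lemma G_one: "\<sigma> \<in> G \<Longrightarrow> \<sigma> 1 = 1" using G_fix sub_k subf_1 by blast
lemma G_zero: "\<sigma> \<in> G \<Longrightarrow> \<sigma> 0 = 0"
proof -
  assume s: "\<sigma> \<in> G"
  have "\<sigma> 0 = \<sigma> 0 + \<sigma> 0" using G_add[OF s, of 0 0] by simp
  then show ?thesis by (metis add_cancel_right_right)
qed
lemma G_uminus: "\<sigma> \<in> G \<Longrightarrow> \<sigma> (- x) = - \<sigma> x"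
proof -
  assume s: "\<sigma> \<in> G"
  have "\<sigma> x + \<sigma> (- x) = 0" using G_add[OF s, of x "-x"] G_zero[OF s] by simp
  then show ?thesis by (metis neg_eq_iff_add_eq_0)
qed
lemma G_diff: "\<sigma> \<in> G \<Longrightarrow> \<sigma> (x - y) = \<sigma> x - \<sigma> y"
  using G_add[of \<sigma> x "-y"] G_uminus by simp
lemma G_sum: "\<sigma> \<in> G \<Longrightarrow> \<sigma> (sum g I) = (\<Sum>i\<in>I. \<sigma> (g i))"
  by (induction I rule: infinite_finite_induct) (auto simp: G_zero G_add)
lemma G_power: "\<sigma> \<in> G \<Longrightarrow> \<sigma> (x ^ m) = \<sigma> x ^ m"
  by (induction m) (auto simp: G_one G_mult)
lemma G_nz: "\<sigma> \<in> G \<Longrightarrow> x \<noteq> 0 \<Longrightarrow> \<sigma> x \<noteq> 0"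
  using G_inj G_zero by (metis injD)
lemma G_inverse: "\<sigma> \<in> G \<Longrightarrow> \<sigma> (inverse x) = inverse (\<sigma> x)"
proof (cases "x = 0")
  case False
  assume s: "\<sigma> \<in> G"
  have "\<sigma> x * \<sigma> (inverse x) = 1" using G_mult[OF s, of x "inverse x"] False G_one[OF s] by simp
  then show ?thesis by (metis inverse_unique)
qed (simp add: G_zero)
lemma G_divide: "\<sigma> \<in> G \<Longrightarrow> \<sigma> (x / y) = \<sigma> x / \<sigma> y"
  by (simp add: divide_inverse G_mult G_inverse)

lemma G_comp: "\<sigma> \<in> G \<Longrightarrow> \<tau> \<in> G \<Longrightarrow> \<tau> \<circ> \<sigma> \<in> G"
proof -
  assume s: "\<sigma> \<in> G" and t: "\<tau> \<in> G"
  have b: "bij (\<tau> \<circ> \<sigma>)" using G_mem[OF s] G_mem[OF t] bij_comp by blast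
  have "\<tau> \<circ> \<sigma> \<in> galois_group k" unfolding galois_group_def
    using b s t by (simp add: G_add G_mult G_fix)
  then show ?thesis using G_def by simp
qed

lemma G_reindex: "\<tau> \<in> G \<Longrightarrow> (\<Sum>\<sigma>\<in>G. g (\<tau> \<circ> \<sigma>)) = (\<Sum>\<sigma>\<in>G. g \<sigma>)"
proof -
  assume t: "\<tau> \<in> G"
  have inj: "inj_on ((\<circ>) \<tau>) G"
  proof (rule inj_onI)
    fix \<sigma>1 \<sigma>2 assume e: "\<tau> \<circ> \<sigma>1 = \<tau> \<circ> \<sigma>2"
    show "\<sigma>1 = \<sigma>2"
    proof
      fix x
      have "\<tau> (\<sigma>1 x) = \<tau> (\<sigma>2 x)" using fun_cong[OF e, of x] by simp
      then show "\<sigma>1 x = \<sigma>2 x" using G_inj[OF t] by (simp add: inj_eq)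
    qed
  qed
  have sub: "(\<circ>) \<tau> ` G \<subseteq> G" using G_comp t by blast
  have "card ((\<circ>) \<tau> ` G) = card G" using card_image[OF inj] .
  then have eq: "(\<circ>) \<tau> ` G = G" using card_subset_eq[OF G_fin sub] by simp
  show ?thesis using sum.reindex[OF inj, of g] eq by simp
qed

lemma G_ded:
  assumes T: "T \<subseteq> G" and h: "\<forall>x. (\<Sum>\<sigma>\<in>T. c \<sigma> * \<sigma> x) = 0"
  shows "\<forall>\<sigma>\<in>T. c \<sigma> = 0"
proof -
  have fT: "finite T" using T G_fin finite_subset by blast
  have m: "\<forall>\<sigma>\<in>T. \<forall>x y. \<sigma> (x * y) = \<sigma> x * \<sigma> y" using T G_mult by blast
  have o: "\<forall>\<sigma>\<in>T. \<sigma> 1 = 1" using T G_one by blast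
  show ?thesis by (rule dedekind[OF fT m o h])
qed

definition Fix :: "'K set" where "Fix = {z. \<forall>\<sigma>\<in>G. \<sigma> z = z}"

lemma artin_bound:
  fixes I :: "'i set" and x :: "'i \<Rightarrow> 'K"
  assumes fI: "finite I" and sp: "\<forall>z. \<exists>a. (\<forall>i\<in>I. a i \<in> Fix) \<and> z = (\<Sum>i\<in>I. a i * x i)"
  shows "card G \<le> card I"
proof (rule ccontr)
  assume lt: "\<not> card G \<le> card I"
  define sm :: "'K \<Rightarrow> ('i \<Rightarrow> 'K) \<Rightarrow> ('i \<Rightarrow> 'K)" where "sm = (\<lambda>c w i. c * w i)"
  interpret fm: fmod "UNIV :: 'K set" sm
    by unfold_locales (simp_all add: sm_def subf_UNIV fun_eq_iff algebra_simps)
  define w where "w \<sigma> = (\<lambda>i. if i \<in> I then \<sigma> (x i) else 0)" for \<sigma> :: "'K \<Rightarrow> 'K"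
  define e where "e j = (\<lambda>i. if i = j then (1::'K) else 0)" for j :: 'i
  have sum_app: "(\<Sum>t\<in>T. g t) i = (\<Sum>t\<in>T. g t i)" for T and g :: "'b \<Rightarrow> 'i \<Rightarrow> 'K" and i
    by (induction T rule: infinite_finite_induct) auto
  have "\<forall>\<sigma>\<in>G. w \<sigma> \<in> fam_span UNIV sm I e"
  proof
    fix \<sigma> assume "\<sigma> \<in> G"
    have "w \<sigma> = (\<Sum>j\<in>I. sm (\<sigma> (x j)) (e j))"
    proof
      fix i
      have "(\<Sum>j\<in>I. sm (\<sigma> (x j)) (e j) i) = (\<Sum>j\<in>I. if j = i then \<sigma> (x i) else 0)"
        by (rule sum.cong) (auto simp: sm_def e_def)
      also have "\<dots> = w \<sigma> i" using fI unfolding w_def by (simp add: sum.delta)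
      finally show "w \<sigma> i = (\<Sum>j\<in>I. sm (\<sigma> (x j)) (e j)) i" unfolding sum_app by simp
    qed
    then show "w \<sigma> \<in> fam_span UNIV sm I e" using fI by (subst fm.span_repr) auto
  qed
  then have "\<not> fam_indep UNIV sm G w" using fm.steinitz[of G w I e] fI lt by auto
  then obtain T c where T: "finite T" "T \<subseteq> G" "(\<Sum>t\<in>T. sm (c t) (w t)) = 0" "\<exists>t\<in>T. c t \<noteq> 0"
    unfolding fam_indep_def by blast
  have rel: "(\<Sum>\<sigma>\<in>T. c \<sigma> * \<sigma> (x i)) = 0" if i: "i \<in> I" for i
  proof -
    have "(\<Sum>t\<in>T. sm (c t) (w t)) i = 0" using T(3) by simp
    then show ?thesis unfolding sum_app sm_def w_def using i by simp
  qed
  have "(\<Sum>\<sigma>\<in>T. c \<sigma> * \<sigma> z) = 0" for z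
  proof -
    obtain a where a: "\<forall>i\<in>I. a i \<in> Fix" "z = (\<Sum>i\<in>I. a i * x i)" using sp by blast
    have "(\<Sum>\<sigma>\<in>T. c \<sigma> * \<sigma> z) = (\<Sum>\<sigma>\<in>T. \<Sum>i\<in>I. a i * (c \<sigma> * \<sigma> (x i)))"
    proof (rule sum.cong)
      fix \<sigma> assume s: "\<sigma> \<in> T"
      then have sG: "\<sigma> \<in> G" using T by auto
      have "\<sigma> z = (\<Sum>i\<in>I. \<sigma> (a i) * \<sigma> (x i))"
        using a sG by (simp add: G_sum G_mult)
      also have "\<dots> = (\<Sum>i\<in>I. a i * \<sigma> (x i))"
        by (rule sum.cong) (use a sG in \<open>auto simp: Fix_def\<close>)
      finally have "\<sigma> z = (\<Sum>i\<in>I. a i * \<sigma> (x i))" .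
      then show "c \<sigma> * \<sigma> z = (\<Sum>i\<in>I. a i * (c \<sigma> * \<sigma> (x i)))"
        by (simp add: sum_distrib_left algebra_simps)
    qed simp
    also have "\<dots> = (\<Sum>i\<in>I. a i * (\<Sum>\<sigma>\<in>T. c \<sigma> * \<sigma> (x i)))"
      by (subst sum.swap) (simp add: sum_distrib_left)
    also have "\<dots> = 0" using rel by simp
    finally show ?thesis .
  qed
  then have "\<forall>\<sigma>\<in>T. c \<sigma> = 0"
    using G_ded[OF T(2)] by blast
  then show False using T(4) by blast
qed

lemma k_Fix: "k \<subseteq> Fix" unfolding Fix_def using G_fix by blast

lemma Fix_k: "Fix \<subseteq> k"
proof
  fix z assume z: "z \<in> Fix"
  obtain a where a: "\<forall>i<n. a i \<in> k" "z = (\<Sum>i<n. a i * \<pi> ^ i)" using basisK by blast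
  show "z \<in> k"
  proof (cases "\<exists>j. 1 \<le> j \<and> j < n \<and> a j \<noteq> 0")
    case False
    have z0: "\<forall>i\<in>{..<n} - {0}. a i * \<pi> ^ i = 0" using False by auto
    have "z = a 0 * \<pi> ^ 0 + (\<Sum>i\<in>{..<n} - {0}. a i * \<pi> ^ i)"
      using a(2) n_pos by (simp add: sum.remove[of "{..<n}" 0])
    then have "z = a 0" using z0 by simp
    then show ?thesis using a n_pos by auto
  next
    case True
    then obtain j where j: "1 \<le> j" "j < n" "a j \<noteq> 0" by blast
    define I where "I = {..<n} - {j}"
    have FixF: "is_subfield Fix"
      unfolding is_subfield_def Fix_def
      by (auto simp: G_zero G_one G_add G_mult G_uminus G_inverse)
    have kF: "x \<in> k \<Longrightarrow> x \<in> Fix" for x using k_Fix by blast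
    define c where "c i = (if i = 0 then (z - a 0) / a j else - a i / a j)" for i
    have cF: "c i \<in> Fix" if "i \<in> I" for i
      unfolding c_def using z kF a(1) j FixF n_pos that unfolding I_def
      by (auto intro!: subf_divide subf_diff subf_uminus)
    define J where "J = {..<n} - {0, j}"
    have IJ: "I = insert 0 J" "0 \<notin> J" using j n_pos unfolding I_def J_def by auto
    have nJ: "{..<n} = insert j (insert 0 J)" "j \<notin> insert 0 J" using j n_pos unfolding J_def by auto
    have fJ: "finite J" unfolding J_def by simp
    have pj: "\<pi> ^ j = (\<Sum>i\<in>I. c i * \<pi> ^ i)"
    proof -
      define S where "S = (\<Sum>i\<in>J. a i * \<pi> ^ i)"
      have "z = a j * \<pi> ^ j + (a 0 + S)"
        using a(2) nJ IJ fJ unfolding S_def by simp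
      then have e1: "\<pi> ^ j = (z - a 0 - S) / a j"
        using j by (simp add: field_simps)
      have e2: "(\<Sum>i\<in>J. c i * \<pi> ^ i) = (\<Sum>i\<in>J. - (a i * \<pi> ^ i) / a j)"
        by (rule sum.cong) (use IJ in \<open>auto simp: c_def\<close>)
      have e3: "(\<Sum>i\<in>J. - (a i * \<pi> ^ i) / a j) = - S / a j"
        unfolding S_def by (simp add: sum_divide_distrib[symmetric] sum_negf)
      have "(\<Sum>i\<in>I. c i * \<pi> ^ i) = c 0 + (\<Sum>i\<in>J. c i * \<pi> ^ i)"
        using IJ fJ by simp
      also have "\<dots> = (z - a 0) / a j - S / a j" using e2 e3 by (simp add: c_def)
      also have "\<dots> = \<pi> ^ j" using e1 by (simp add: diff_divide_distrib)
      finally show ?thesis by simp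
    qed
    have "\<forall>y. \<exists>b. (\<forall>i\<in>I. b i \<in> Fix) \<and> y = (\<Sum>i\<in>I. b i * \<pi> ^ i)"
    proof
      fix y
      obtain b where b: "\<forall>i<n. b i \<in> k" "y = (\<Sum>i<n. b i * \<pi> ^ i)" using basisK by blast
      have "y = b j * \<pi> ^ j + (\<Sum>i\<in>I. b i * \<pi> ^ i)"
        using b(2) j unfolding I_def by (simp add: sum.remove[of "{..<n}" j])
      also have "\<dots> = (\<Sum>i\<in>I. (b i + b j * c i) * \<pi> ^ i)"
        unfolding pj by (simp add: sum_distrib_left algebra_simps sum.distrib)
      finally show "\<exists>b'. (\<forall>i\<in>I. b' i \<in> Fix) \<and> y = (\<Sum>i\<in>I. b' i * \<pi> ^ i)"
        using b(1) kF cF FixF j(2) unfolding I_def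
        by (intro exI[of _ "\<lambda>i. b i + b j * c i"]) (auto intro!: subf_add subf_mult)
    qed
    then have "card G \<le> card I" using artin_bound[of I "\<lambda>i. \<pi> ^ i"] unfolding I_def by auto
    moreover have "card I = n - 1" using j unfolding I_def by simp
    ultimately show ?thesis using galois n_pos by simp
  qed
qed

lemma Fix_eq: "Fix = k" using Fix_k k_Fix by blast

lemma trace_k: "trace G x \<in> k"
proof -
  have "\<tau> (trace G x) = trace G x" if t: "\<tau> \<in> G" for \<tau>
  proof -
    have "\<tau> (trace G x) = (\<Sum>\<sigma>\<in>G. (\<tau> \<circ> \<sigma>) x)" unfolding trace_def using t by (simp add: G_sum)
    also have "\<dots> = trace G x" unfolding trace_def by (rule G_reindex[OF t, of "\<lambda>\<sigma>. \<sigma> x"])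
    finally show ?thesis .
  qed
  then show ?thesis using Fix_eq unfolding Fix_def by blast
qed

lemma trace_mult_k: "a \<in> k \<Longrightarrow> trace G (a * x) = a * trace G x"
  unfolding trace_def by (simp add: G_mult G_fix sum_distrib_left)

lemma trace_add: "trace G (x + y) = trace G x + trace G y"
  unfolding trace_def by (simp add: G_add sum.distrib)

lemma trace_nonzero: "\<exists>z. trace G z \<noteq> 0"
proof (rule ccontr)
  assume "\<not> (\<exists>z. trace G z \<noteq> 0)"
  then have "\<forall>z. (\<Sum>\<sigma>\<in>G. 1 * \<sigma> z) = 0" unfolding trace_def by simp
  then have "\<forall>\<sigma>\<in>G. (1::'K) = 0" using G_ded[of G "\<lambda>_. 1"] by blast
  moreover have "G \<noteq> {}" using galois n_pos by auto
  ultimately show False by auto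
qed

end


context setting
begin

lemma act_add_x: "act G f (x + y) = act G f x + act G f y"
  unfolding act_def by (simp add: G_add distrib_left sum.distrib)

lemma act_diff_x: "act G f (x - y) = act G f x - act G f y"
  unfolding act_def by (simp add: G_diff right_diff_distrib sum_subtractf)

lemma act_mult_k: "a \<in> k \<Longrightarrow> act G f (a * x) = a * act G f x"
  unfolding act_def by (simp add: G_mult G_fix sum_distrib_left algebra_simps)

lemma act_zero_x: "act G f 0 = 0"
  unfolding act_def by (simp add: G_zero)

lemma act_lin: "act G (\<lambda>\<sigma>. \<Sum>b\<in>B. c b * b \<sigma>) x = (\<Sum>b\<in>B. c b * act G b x)"
  unfolding act_def by (simp add: sum_distrib_right sum_distrib_left mult.assoc) (rule sum.swap)

lemma act_add_f: "act G (\<lambda>\<sigma>. f \<sigma> + g \<sigma>) x = act G f x + act G g x"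
  unfolding act_def by (simp add: distrib_right sum.distrib)

lemma act_diff_f: "act G (\<lambda>\<sigma>. f \<sigma> - g \<sigma>) x = act G f x - act G g x"
  unfolding act_def by (simp add: left_diff_distrib sum_subtractf)

lemma act_scale_f: "act G (\<lambda>\<sigma>. c * f \<sigma>) x = c * act G f x"
  unfolding act_def by (simp add: sum_distrib_left mult.assoc)

lemma act_zero_f: "act G (\<lambda>\<sigma>. 0) x = 0"
  unfolding act_def by simp

lemma Cset_iff: "f \<in> Cset v G i \<longleftrightarrow> inKG G f \<and> (\<forall>x. x \<noteq> 0 \<longrightarrow> vg v (act G f x) (v x + i))"
  unfolding Cset_def vg_def by auto

lemma CsetI: "inKG G f \<Longrightarrow> (\<And>x. x \<noteq> 0 \<Longrightarrow> vg v (act G f x) (v x + i)) \<Longrightarrow> f \<in> Cset v G i"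
  using Cset_iff by blast

lemma CsetD: "f \<in> Cset v G i \<Longrightarrow> x \<noteq> 0 \<Longrightarrow> vg v (act G f x) (v x + i)"
  using Cset_iff by blast

lemma Cset_inKG: "f \<in> Cset v G i \<Longrightarrow> inKG G f"
  using Cset_iff by blast

lemma Cset_mono: "f \<in> Cset v G i \<Longrightarrow> j \<le> i \<Longrightarrow> f \<in> Cset v G j"
  unfolding Cset_iff using vg_mono by (meson add_left_mono)

lemma inKG_add: "inKG G f \<Longrightarrow> inKG G g \<Longrightarrow> inKG G (\<lambda>\<sigma>. f \<sigma> + g \<sigma>)"
  unfolding inKG_def by simp
lemma inKG_diff: "inKG G f \<Longrightarrow> inKG G g \<Longrightarrow> inKG G (\<lambda>\<sigma>. f \<sigma> - g \<sigma>)"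
  unfolding inKG_def by simp
lemma inKG_scale: "inKG G f \<Longrightarrow> inKG G (\<lambda>\<sigma>. c * f \<sigma>)"
  unfolding inKG_def by simp
lemma inKG_lin: "(\<And>b. b \<in> B \<Longrightarrow> inKG G b) \<Longrightarrow> inKG G (\<lambda>\<sigma>. \<Sum>b\<in>B. c b * b \<sigma>)"
  unfolding inKG_def by (auto intro!: sum.neutral)
lemma inKG_zero: "inKG G (\<lambda>\<sigma>. 0)"
  unfolding inKG_def by simp

lemma Cset_add: "f \<in> Cset v G i \<Longrightarrow> g \<in> Cset v G i \<Longrightarrow> (\<lambda>\<sigma>. f \<sigma> + g \<sigma>) \<in> Cset v G i"
  by (intro CsetI) (auto simp: act_add_f inKG_add Cset_inKG CsetD intro!: vg_add)

lemma Cset_diff: "f \<in> Cset v G i \<Longrightarrow> g \<in> Cset v G i \<Longrightarrow> (\<lambda>\<sigma>. f \<sigma> - g \<sigma>) \<in> Cset v G i"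
  by (intro CsetI) (auto simp: act_diff_f inKG_diff Cset_inKG CsetD intro!: vg_diff)

lemma Cset_zero: "(\<lambda>\<sigma>. 0) \<in> Cset v G i"
  by (intro CsetI) (simp_all add: act_zero_f inKG_zero)

lemma Cset_scale: "c \<in> k \<Longrightarrow> c \<noteq> 0 \<Longrightarrow> f \<in> Cset v G i \<Longrightarrow> (\<lambda>\<sigma>. c * f \<sigma>) \<in> Cset v G (i + v c)"
proof (intro CsetI)
  fix x :: 'K assume c: "c \<in> k" "c \<noteq> 0" and f: "f \<in> Cset v G i" and x: "x \<noteq> 0"
  have "vg v (act G f x) (v x + i)" using CsetD[OF f x] .
  then have "vg v (c * act G f x) (v c + (v x + i))" using vg_mult vg_v by blast
  then show "vg v (act G (\<lambda>\<sigma>. c * f \<sigma>) x) (v x + (i + v c))"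
    by (simp add: act_scale_f algebra_simps)
qed (use Cset_inKG inKG_scale in blast)

lemma Cset_scale0: "c \<in> k \<Longrightarrow> f \<in> Cset v G i \<Longrightarrow> vg v c j \<Longrightarrow> (\<lambda>\<sigma>. c * f \<sigma>) \<in> Cset v G (i + j)"
proof (cases "c = 0")
  case True
  then show ?thesis using Cset_zero by simp
next
  case False
  assume "c \<in> k" "f \<in> Cset v G i" "vg v c j"
  then have "(\<lambda>\<sigma>. c * f \<sigma>) \<in> Cset v G (i + v c)" using Cset_scale False by blast
  moreover have "j \<le> v c" using \<open>vg v c j\<close> False by (simp add: vg_def)
  ultimately show ?thesis using Cset_mono by (metis add_left_mono)
qed

lemma Cset_sum: "(\<And>b. b \<in> B \<Longrightarrow> g b \<in> Cset v G i) \<Longrightarrow> (\<lambda>\<sigma>. \<Sum>b\<in>B. g b \<sigma>) \<in> Cset v G i"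
proof (induction B rule: infinite_finite_induct)
  case (infinite A)
  then show ?case using Cset_zero by simp
next
  case empty
  then show ?case using Cset_zero by simp
next
  case (insert b B)
  then have "(\<lambda>\<sigma>. g b \<sigma> + (\<Sum>b\<in>B. g b \<sigma>)) \<in> Cset v G i"
    by (intro Cset_add) auto
  then show ?case using insert.hyps by simp
qed

definition Cb :: int where "Cb = int n * (\<Sum>\<sigma>\<in>G. \<bar>v (\<sigma> \<pi>) - 1\<bar>)"

lemma sigma_bound: "\<sigma> \<in> G \<Longrightarrow> vg v x N \<Longrightarrow> vg v (\<sigma> x) (N - Cb)"
proof -
  assume s: "\<sigma> \<in> G" and x: "vg v x N"
  obtain a where a: "\<forall>i<n. a i \<in> k" "x = (\<Sum>i<n. a i * \<pi> ^ i)" using basisK by blast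
  have each: "\<forall>i<n. vg v (a i * \<pi> ^ i) N"
    using expansion_vg[OF sub_k n_pos dvd_k unif a(1), of N] x a(2) by simp
  have sp: "\<sigma> \<pi> \<noteq> 0" using G_nz[OF s unif(1)] .
  have le: "\<bar>v (\<sigma> \<pi>) - 1\<bar> \<le> (\<Sum>\<tau>\<in>G. \<bar>v (\<tau> \<pi>) - 1\<bar>)"
    using s G_fin by (intro member_le_sum) auto
  have "\<sigma> x = (\<Sum>i<n. a i * \<sigma> \<pi> ^ i)" using a s by (simp add: G_sum G_mult G_fix G_power)
  moreover have "vg v (a i * \<sigma> \<pi> ^ i) (N - Cb)" if i: "i < n" for i
  proof (cases "a i = 0")
    case False
    have "v (a i * \<pi> ^ i) \<ge> N" using each[rule_format, OF i] False unif by (simp add: vg_def)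
    then have "v (a i) + int i \<ge> N" using False unif by (simp add: v_mult v_power)
    moreover have "v (a i * \<sigma> \<pi> ^ i) = v (a i) + int i * v (\<sigma> \<pi>)"
      using False sp by (simp add: v_mult v_power)
    moreover have "int i * (v (\<sigma> \<pi>) - 1) \<ge> - Cb"
    proof -
      have "\<bar>int i * (v (\<sigma> \<pi>) - 1)\<bar> = int i * \<bar>v (\<sigma> \<pi>) - 1\<bar>" by (simp add: abs_mult)
      also have "\<dots> \<le> int n * (\<Sum>\<tau>\<in>G. \<bar>v (\<tau> \<pi>) - 1\<bar>)"
        using i le by (intro mult_mono) auto
      finally show ?thesis unfolding Cb_def by linarith
    qed
    ultimately show ?thesis using False sp by (simp add: vg_def algebra_simps)
  qed simp
  ultimately show ?thesis by (auto intro!: vg_sum)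
qed

lemma Cb_nonneg: "Cb \<ge> 0" unfolding Cb_def by (simp add: sum_nonneg)

lemma Cset_exists: "inKG G f \<Longrightarrow> \<exists>i. f \<in> Cset v G i"
proof -
  assume f: "inKG G f"
  define M where "M = - (\<Sum>\<sigma>\<in>G. \<bar>v (f \<sigma>)\<bar>)"
  have fM: "vg v (f \<sigma>) M" if "\<sigma> \<in> G" for \<sigma>
  proof -
    have "\<bar>v (f \<sigma>)\<bar> \<le> (\<Sum>\<sigma>\<in>G. \<bar>v (f \<sigma>)\<bar>)" using that G_fin by (intro member_le_sum) auto
    then show ?thesis unfolding M_def vg_def by linarith
  qed
  have "f \<in> Cset v G (M - Cb)"
  proof (rule CsetI[OF f])
    fix x :: 'K assume "x \<noteq> 0"
    have "vg v (f \<sigma> * \<sigma> x) (v x + (M - Cb))" if "\<sigma> \<in> G" for \<sigma>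
    proof -
      have "vg v (\<sigma> x) (v x - Cb)" using sigma_bound[OF that vg_v] .
      then have "vg v (f \<sigma> * \<sigma> x) (M + (v x - Cb))" using vg_mult fM[OF that] by blast
      then show ?thesis by (simp add: algebra_simps)
    qed
    then show "vg v (act G f x) (v x + (M - Cb))" unfolding act_def by (auto intro!: vg_sum)
  qed
  then show ?thesis by blast
qed

lemma inKG_zero_iff: "inKG G f \<Longrightarrow> (\<forall>\<sigma>\<in>G. f \<sigma> = 0) \<Longrightarrow> f = (\<lambda>\<sigma>. 0)"
  unfolding inKG_def by auto

lemma Cset_notall: "inKG G f \<Longrightarrow> f \<noteq> (\<lambda>\<sigma>. 0) \<Longrightarrow> \<exists>i. f \<notin> Cset v G i"
proof -
  assume f: "inKG G f" "f \<noteq> (\<lambda>\<sigma>. 0)"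
  have "\<exists>x. act G f x \<noteq> 0"
  proof (rule ccontr)
    assume "\<not> (\<exists>x. act G f x \<noteq> 0)"
    then have "\<forall>x. (\<Sum>\<sigma>\<in>G. f \<sigma> * \<sigma> x) = 0" unfolding act_def by simp
    then have "\<forall>\<sigma>\<in>G. f \<sigma> = 0" using G_ded[of G f] by blast
    then show False using inKG_zero_iff[OF f(1)] f(2) by blast
  qed
  then obtain x where x: "act G f x \<noteq> 0" by blast
  then have x0: "x \<noteq> 0" using act_zero_x by auto
  have "f \<notin> Cset v G (v (act G f x) - v x + 1)"
  proof
    assume "f \<in> Cset v G (v (act G f x) - v x + 1)"
    then have "vg v (act G f x) (v x + (v (act G f x) - v x + 1))" using CsetD x0 by blast
    then show False using x by (simp add: vg_def)
  qed
  then show ?thesis by blast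
qed

lemma dval_exists:
  assumes f: "inKG G f" "f \<noteq> (\<lambda>\<sigma>. 0)"
  shows "\<exists>i. f \<in> Cset v G i \<and> f \<notin> Cset v G (i + 1)"
proof -
  obtain i1 where i1: "f \<in> Cset v G i1" using Cset_exists[OF f(1)] by blast
  obtain i0 where i0: "f \<notin> Cset v G i0" using Cset_notall[OF f] by blast
  have lt: "i1 < i0" using i1 i0 Cset_mono by (meson not_le_imp_less)
  define S where "S = {i. i1 \<le> i \<and> i \<le> i0 \<and> f \<in> Cset v G i}"
  have fS: "finite S" unfolding S_def by (rule finite_subset[of _ "{i1..i0}"]) auto
  have i1S: "i1 \<in> S" unfolding S_def using i1 lt by simp
  define m where "m = Max S"
  have mS: "m \<in> S" unfolding m_def using fS i1S by (intro Max_in) auto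
  have "f \<notin> Cset v G (m + 1)"
  proof
    assume h: "f \<in> Cset v G (m + 1)"
    have "m + 1 \<le> i0"
    proof (rule ccontr)
      assume "\<not> m + 1 \<le> i0"
      then have "f \<in> Cset v G i0" using Cset_mono[OF h] by simp
      then show False using i0 by simp
    qed
    then have "m + 1 \<in> S" using h mS unfolding S_def by simp
    then have "m + 1 \<le> m" unfolding m_def using fS by (intro Max_ge) auto
    then show False by simp
  qed
  then show ?thesis using mS unfolding S_def by blast
qed

lemma dval_char:
  assumes f: "inKG G f" "f \<noteq> (\<lambda>\<sigma>. 0)"
  shows "f \<in> Cset v G (dval v G d f + d) \<and> f \<notin> Cset v G (dval v G d f + d + 1)"
proof -
  obtain i where i: "f \<in> Cset v G i" "f \<notin> Cset v G (i + 1)" using dval_exists[OF f] by blast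
  have "dval v G d f = i - d"
    unfolding dval_def
  proof (rule the_equality)
    show "f \<in> Cset v G (i - d + d) \<and> f \<notin> Cset v G (i - d + d + 1)" using i by simp
  next
    fix j assume j: "f \<in> Cset v G (j + d) \<and> f \<notin> Cset v G (j + d + 1)"
    have "j + d \<le> i"
    proof (rule ccontr)
      assume "\<not> j + d \<le> i"
      then have "f \<in> Cset v G (i + 1)" using j Cset_mono[of f "j + d" "i + 1"] by simp
      then show False using i by simp
    qed
    moreover have "i \<le> j + d"
    proof (rule ccontr)
      assume "\<not> i \<le> j + d"
      then have "f \<in> Cset v G (j + d + 1)" using i Cset_mono[of f i "j + d + 1"] by simp
      then show False using j by simp
    qed
    ultimately show "j = i - d" by simp
  qed
  then show ?thesis using i by simp
qed

lemma Cset_dval_iff: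
  assumes f: "inKG G f" "f \<noteq> (\<lambda>\<sigma>. 0)"
  shows "f \<in> Cset v G j \<longleftrightarrow> j \<le> dval v G d f + d"
proof
  assume "f \<in> Cset v G j"
  then show "j \<le> dval v G d f + d"
    using dval_char[OF f] Cset_mono[of f j "dval v G d f + d + 1"] by (meson not_le_imp_less zless_imp_add1_zle)
next
  assume "j \<le> dval v G d f + d"
  then show "f \<in> Cset v G j" using dval_char[OF f] Cset_mono by blast
qed

lemma dval_eqI:
  assumes "inKG G f" "f \<in> Cset v G (i + d)" "f \<notin> Cset v G (i + d + 1)"
  shows "dval v G d f = i"
proof -
  have f0: "f \<noteq> (\<lambda>\<sigma>. 0)" using assms(3) Cset_zero by auto
  show ?thesis using Cset_dval_iff[OF assms(1) f0, of "i + d"] Cset_dval_iff[OF assms(1) f0, of "i + d + 1"]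
    assms by simp
qed

end


context setting
begin

lemma O_iff: "x \<in> val_ring v \<longleftrightarrow> vg v x 0"
  unfolding val_ring_def vg_def by simp

lemma r_add: "vg v x 0 \<Longrightarrow> vg v y 0 \<Longrightarrow> r (x + y) = r x + r y"
  using res unfolding is_residue_map_def O_iff[symmetric] by blast
lemma r_mult: "vg v x 0 \<Longrightarrow> vg v y 0 \<Longrightarrow> r (x * y) = r x * r y"
  using res unfolding is_residue_map_def O_iff[symmetric] by blast
lemma r_one: "r 1 = 1"
  using res unfolding is_residue_map_def by blast
lemma r_surj: "\<exists>x. vg v x 0 \<and> r x = z"
proof -
  obtain x where "x \<in> val_ring v" "r x = z" using res unfolding is_residue_map_def by blast
  then show ?thesis using O_iff by blast
qed
lemma r_zero_iff: "vg v x 0 \<Longrightarrow> r x = 0 \<longleftrightarrow> vg v x 1"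
proof -
  assume "vg v x 0"
  then have x: "x \<in> val_ring v" using O_iff by blast
  have "\<forall>x\<in>val_ring v. r x = 0 \<longleftrightarrow> (x = 0 \<or> v x \<ge> 1)" using res unfolding is_residue_map_def by blast
  then show ?thesis using x unfolding vg_def by blast
qed
lemma r_zero: "r 0 = 0" using r_zero_iff[of 0] by simp
lemma r_uminus: "vg v x 0 \<Longrightarrow> r (- x) = - r x"
proof -
  assume x: "vg v x 0"
  have "r x + r (- x) = 0" using r_add[OF x, of "-x"] x r_zero by simp
  then show ?thesis by (metis neg_eq_iff_add_eq_0)
qed
lemma r_diff: "vg v x 0 \<Longrightarrow> vg v y 0 \<Longrightarrow> r (x - y) = r x - r y"
  using r_add[of x "-y"] r_uminus[of y] by simp
lemma r_sum: "(\<And>i. i \<in> I \<Longrightarrow> vg v (g i) 0) \<Longrightarrow> r (sum g I) = (\<Sum>i\<in>I. r (g i))"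
proof (induction I rule: infinite_finite_induct)
  case (insert i I)
  then show ?case using r_add[of "g i" "sum g I"] by (simp add: vg_sum)
qed (simp_all add: r_zero)

lemma r_unit: "x \<noteq> 0 \<Longrightarrow> v x = 0 \<Longrightarrow> r x \<noteq> 0"
  using r_zero_iff[of x] by (simp add: vg_def)

lemma r_eq_lift: "vg v x 0 \<Longrightarrow> \<exists>a\<in>k0. vg v a 0 \<and> r a = r x \<and> vg v (x - a) 1"
proof -
  assume x: "vg v x 0"
  obtain a where a: "a \<in> k0" "vg v a 0" "vg v (x - a) 1" using lift_k0[OF x] by blast
  have "r (x - a) = 0" using r_zero_iff[of "x - a"] a x vg_diff by blast
  then have "r x = r a" using r_diff[OF x a(2)] by simp
  then show ?thesis using a by auto
qed

section \<open>Trace and codifferent\<close>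

lemma rho_exists: "\<exists>\<rho>. \<rho> \<in> k \<and> \<rho> \<noteq> 0 \<and> v \<rho> = int n"
proof -
  have "int n * 1 \<in> v ` (k - {0})" using totram_Kk by blast
  then obtain \<rho> where "\<rho> \<in> k - {0}" "int n * 1 = v \<rho>" by (rule imageE)
  then show ?thesis by auto
qed

lemma trace_bound: "vg v x N \<Longrightarrow> vg v (trace G x) (N - Cb)"
  unfolding trace_def using sigma_bound by (auto intro!: vg_sum)

lemma trace_zero: "trace G 0 = 0" unfolding trace_def by (simp add: G_zero)

lemma trace_sum: "trace G (sum g I) = (\<Sum>i\<in>I. trace G (g i))"
proof (induction I rule: infinite_finite_induct)
  case (insert i I)
  then show ?case by (simp add: trace_add)
qed (simp_all add: trace_zero)

lemma codiff_iff: "x \<in> codifferent v G k \<longleftrightarrow> (\<forall>y. vg v y 0 \<longrightarrow> vg v (trace G (x * y)) 0)"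
proof -
  have "x \<in> codifferent v G k \<longleftrightarrow> (\<forall>y\<in>val_ring v. trace G (x * y) \<in> val_ring v)"
    unfolding codifferent_def using trace_k by blast
  then show ?thesis by (simp add: Ball_def O_iff)
qed

lemma codiff_trace: "x \<in> codifferent v G k \<Longrightarrow> vg v (trace G x) 0"
proof -
  assume "x \<in> codifferent v G k"
  then have h: "\<forall>y. vg v y 0 \<longrightarrow> vg v (trace G (x * y)) 0" unfolding codiff_iff by blast
  have one: "vg v 1 0" by (simp add: vg_def)
  have "vg v (trace G (x * 1)) 0" using h[rule_format, OF one] .
  then show ?thesis by simp
qed

lemma codiff_big: "vg v x Cb \<Longrightarrow> x \<in> codifferent v G k"
  unfolding codiff_iff using trace_bound vg_mult by (metis add.right_neutral diff_self)

lemma codiff_up: "x \<in> codifferent v G k \<Longrightarrow> x \<noteq> 0 \<Longrightarrow> vg v x' (v x) \<Longrightarrow> x' \<in> codifferent v G k"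
proof -
  assume x: "x \<in> codifferent v G k" "x \<noteq> 0" and x': "vg v x' (v x)"
  have q: "vg v (x' / x) 0"
  proof (cases "x' = 0")
    case False
    then show ?thesis using x' x(2) by (simp add: vg_def v_divide)
  qed simp
  show ?thesis unfolding codiff_iff
  proof (intro allI impI)
    fix y assume y: "vg v y 0"
    have "vg v (x' / x * y) 0" using vg_mult[OF q y] by simp
    then have "vg v (trace G (x * (x' / x * y))) 0" using x(1) unfolding codiff_iff by blast
    then show "vg v (trace G (x' * y)) 0" using x(2) by (simp add: field_simps)
  qed
qed

lemma codiff_bounded: "\<exists>M. \<forall>x\<in>codifferent v G k. vg v x M"
proof -
  obtain z0 where z0: "trace G z0 \<noteq> 0" using trace_nonzero by blast
  define t0 where "t0 = trace G z0"
  have z00: "z0 \<noteq> 0" using z0 unfolding trace_def by (auto simp: G_zero)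
  have t0k: "t0 \<in> k" unfolding t0_def by (rule trace_k)
  obtain \<rho> where \<rho>: "\<rho> \<in> k" "\<rho> \<noteq> 0" "v \<rho> = int n" using rho_exists by blast
  define \<mu> where "\<mu> = inverse \<rho> / t0"
  have \<mu>k: "\<mu> \<in> k" unfolding \<mu>_def using \<rho> t0k sub_k by (intro subf_divide subf_inverse) auto
  have \<mu>0: "\<mu> \<noteq> 0" unfolding \<mu>_def using \<rho> z0 t0_def by simp
  define M where "M = v z0 + v \<mu> + 1"
  have "vg v x M" if x: "x \<in> codifferent v G k" for x
  proof (cases "x = 0")
    case False
    show ?thesis
    proof (rule ccontr)
      assume "\<not> vg v x M"
      then have vx: "v x < M" using False by (simp add: vg_def)
      define y where "y = z0 * \<mu> / x"
      have "vg v y 0" unfolding y_def using vx z00 \<mu>0 False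
        by (simp add: vg_def v_divide v_mult M_def)
      then have "vg v (trace G (x * y)) 0" using x codiff_iff by blast
      moreover have "x * y = \<mu> * z0" unfolding y_def using False by (simp add: field_simps)
      ultimately have "vg v (\<mu> * t0) 0" using trace_mult_k[OF \<mu>k] unfolding t0_def by simp
      moreover have "\<mu> * t0 = inverse \<rho>" unfolding \<mu>_def using z0 t0_def by simp
      ultimately show False using \<rho> n_pos by (simp add: vg_def v_inverse)
    qed
  qed simp
  then show ?thesis by blast
qed

lemma codiff_exists: "\<exists>\<delta>. \<forall>x. x \<in> codifferent v G k \<longleftrightarrow> (x = 0 \<or> v x \<ge> - \<delta>)"
proof -
  obtain M where M: "\<forall>x\<in>codifferent v G k. vg v x M" using codiff_bounded by blast
  obtain x1 where x1: "x1 \<noteq> 0" "v x1 = Cb" using v_surj by blast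
  have x1c: "x1 \<in> codifferent v G k" using codiff_big x1 by (simp add: vg_def)
  define S where "S = {j. M \<le> j \<and> j \<le> Cb \<and> (\<exists>x\<in>codifferent v G k. x \<noteq> 0 \<and> v x = j)}"
  have fS: "finite S" unfolding S_def by (rule finite_subset[of _ "{M..Cb}"]) auto
  have CbS: "Cb \<in> S" unfolding S_def using x1 x1c M by (auto simp: vg_def)
  define m where "m = Min S"
  have mS: "m \<in> S" unfolding m_def using fS CbS by (intro Min_in) auto
  then obtain xm where xm: "xm \<in> codifferent v G k" "xm \<noteq> 0" "v xm = m" unfolding S_def by blast
  have "x \<in> codifferent v G k \<longleftrightarrow> (x = 0 \<or> v x \<ge> m)" for x
  proof
    assume x: "x \<in> codifferent v G k"
    show "x = 0 \<or> v x \<ge> m"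
    proof (cases "x = 0")
      case False
      show ?thesis
      proof (cases "v x \<le> Cb")
        case True
        then have "v x \<in> S" unfolding S_def using x False M by (auto simp: vg_def)
        then show ?thesis unfolding m_def using fS by simp
      next
        case False
        then show ?thesis using mS unfolding S_def by auto
      qed
    qed simp
  next
    assume "x = 0 \<or> v x \<ge> m"
    then have "vg v x (v xm)" using xm by (auto simp: vg_def)
    then show "x \<in> codifferent v G k" using codiff_up[OF xm(1,2)] by blast
  qed
  then show ?thesis by (intro exI[of _ "- m"]) simp
qed

definition \<delta> :: int where "\<delta> = diff_val v G k"

lemma delta_char: "x \<in> codifferent v G k \<longleftrightarrow> vg v x (- \<delta>)"
proof -
  obtain \<delta>0 where h: "\<forall>x. x \<in> codifferent v G k \<longleftrightarrow> (x = 0 \<or> v x \<ge> - \<delta>0)" using codiff_exists by blast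
  have "diff_val v G k = \<delta>0"
    unfolding diff_val_def
  proof (rule the_equality)
    show "\<forall>x. x \<in> codifferent v G k \<longleftrightarrow> (x = 0 \<or> - \<delta>0 \<le> v x)" using h by blast
  next
    fix e assume e: "\<forall>x. x \<in> codifferent v G k \<longleftrightarrow> (x = 0 \<or> - e \<le> v x)"
    obtain x where x: "x \<noteq> 0" "v x = - e" using v_surj by blast
    obtain y where y: "y \<noteq> 0" "v y = - \<delta>0" using v_surj by blast
    have "- \<delta>0 \<le> - e" using e h x by auto
    moreover have "- e \<le> - \<delta>0" using e h y by auto
    ultimately show "e = \<delta>0" by simp
  qed
  then show ?thesis using h unfolding \<delta>_def vg_def by auto
qed

lemma d_eq: "d = \<delta> - int n + 1" using d_def \<delta>_def by simp

lemma pi_powi_nz: "\<pi> powi m \<noteq> 0" using unif by (simp add: power_int_not_zero)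
lemma v_pi_powi: "v (\<pi> powi m) = m" using unif by (simp add: v_powi)
lemma pi_powi_add: "\<pi> powi (a + b) = \<pi> powi a * \<pi> powi b" using unif by (simp add: power_int_add)

lemma c\<pi>_unit: "c\<pi> \<noteq> 0 \<and> v c\<pi> = 0"
proof -
  define t where "t = trace G (\<pi> powi (- \<delta> - 1))"
  have tk: "t \<in> k" unfolding t_def by (rule trace_k)
  have "\<pi> powi (- \<delta> - 1) \<notin> codifferent v G k"
    unfolding delta_char vg_def using pi_powi_nz[of "- \<delta> - 1"] v_pi_powi[of "- \<delta> - 1"] by linarith
  then obtain y where y: "vg v y 0" "\<not> vg v (trace G (\<pi> powi (- \<delta> - 1) * y)) 0"
    unfolding codiff_iff by blast
  obtain a where a: "\<forall>i<n. a i \<in> k" "y = (\<Sum>i<n. a i * \<pi> ^ i)" using basisK by blast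
  have each: "\<forall>i<n. vg v (a i * \<pi> ^ i) 0"
    using expansion_vg[OF sub_k n_pos dvd_k unif a(1), of 0] y(1) a(2) by simp
  have aO: "vg v (a i) 0" if i: "i < n" for i
  proof (cases "a i = 0")
    case False
    have "v (a i * \<pi> ^ i) \<ge> 0" using each[rule_format, OF i] False unif by (simp add: vg_def)
    then have "v (a i) + int i \<ge> 0" using False unif by (simp add: v_mult v_power)
    moreover obtain q where q: "v (a i) = int n * q" using dvd_k a(1) i False by blast
    ultimately have "int n * q > - int n" using i by simp
    then have "q > -1" by (metis mult.right_neutral mult_minus_right mult_less_cancel_left_pos
          of_nat_0_less_iff n_pos)
    then show ?thesis using q False by (simp add: vg_def)
  qed simp
  have tr: "trace G (\<pi> powi (- \<delta> - 1) * y) = (\<Sum>i<n. a i * trace G (\<pi> powi (int i - \<delta> - 1)))"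
  proof -
    have "\<pi> powi (- \<delta> - 1) * y = (\<Sum>i<n. a i * \<pi> powi (int i - \<delta> - 1))"
      unfolding a(2) sum_distrib_left
    proof (rule sum.cong)
      fix i assume "i \<in> {..<n}"
      have "\<pi> powi (int i - \<delta> - 1) = \<pi> powi (- \<delta> - 1) * \<pi> powi (int i)"
        using pi_powi_add[of "- \<delta> - 1" "int i"] by (simp add: algebra_simps)
      then show "\<pi> powi (- \<delta> - 1) * (a i * \<pi> ^ i) = a i * \<pi> powi (int i - \<delta> - 1)" by simp
    qed simp
    then show ?thesis using a(1) by (simp add: trace_sum trace_mult_k)
  qed
  have hi: "vg v (a i * trace G (\<pi> powi (int i - \<delta> - 1))) 0" if i: "i \<in> {1..<n}" for i
  proof -
    have "\<pi> powi (int i - \<delta> - 1) \<in> codifferent v G k"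
      unfolding delta_char using i by (simp add: vg_def v_pi_powi)
    then have "vg v (trace G (\<pi> powi (int i - \<delta> - 1))) 0" by (rule codiff_trace)
    then show ?thesis using aO[of i] i vg_mult by fastforce
  qed
  have "(\<Sum>i<n. a i * trace G (\<pi> powi (int i - \<delta> - 1))) = a 0 * t + (\<Sum>i\<in>{1..<n}. a i * trace G (\<pi> powi (int i - \<delta> - 1)))"
  proof -
    have "{..<n} = insert 0 {1..<n}" using n_pos by auto
    then show ?thesis unfolding t_def by simp
  qed
  then have "\<not> vg v (a 0 * t) 0" using y(2) tr hi vg_add vg_sum by (metis (no_types, lifting) add_diff_cancel_right' vg_diff)
  then have t0: "t \<noteq> 0" "v t < 0" using aO[of 0] n_pos by (auto simp: vg_def v_mult)
  obtain qt where qt: "v t = int n * qt" using dvd_k tk t0 by blast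
  have vt: "v t \<le> - int n"
  proof -
    have "qt < 0" using qt t0 n_pos by (simp add: mult_less_0_iff)
    then have "qt \<le> -1" by simp
    then have "int n * qt \<le> int n * (-1)" using n_pos by (intro mult_left_mono) auto
    then show ?thesis using qt by simp
  qed
  obtain \<rho> where \<rho>: "\<rho> \<in> k" "\<rho> \<noteq> 0" "v \<rho> = int n" using rho_exists by blast
  define u where "u = \<pi> ^ n / \<rho>"
  have u0: "u \<noteq> 0" "v u = 0" unfolding u_def using \<rho> unif by (auto simp: v_divide v_power)
  obtain b where b: "b \<in> k0" "vg v b 0" "vg v (u - b) 1" using lift_k0[of u] u0 by (auto simp: vg_def)
  have b0: "b \<noteq> 0" "v b = 0"
  proof -
    show "b \<noteq> 0" using b(3) u0 by (auto simp: vg_def)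
    have "v b \<le> 0"
    proof (rule ccontr)
      assume "\<not> v b \<le> 0"
      then have "vg v b 1" by (simp add: vg_def)
      then have "vg v (b + (u - b)) 1" using b(3) vg_add by blast
      then show False using u0 by (simp add: vg_def)
    qed
    then show "v b = 0" using b(2) \<open>b \<noteq> 0\<close> by (simp add: vg_def)
  qed
  have bk: "b \<in> k" using b(1) k0k by blast
  have pe: "\<pi> powi (- d) = u * \<rho> * \<pi> powi (- \<delta> - 1)"
  proof -
    have e: "- d = int n + (- \<delta> - 1)" using d_eq by simp
    have "\<pi> powi (- d) = \<pi> powi (int n) * \<pi> powi (- \<delta> - 1)"
      unfolding e by (rule pi_powi_add)
    then show ?thesis unfolding u_def using \<rho> by simp
  qed
  have cp: "c\<pi> = b * \<rho> * t + \<rho> * trace G ((u - b) * \<pi> powi (- \<delta> - 1))"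
  proof -
    have "\<pi> powi (- d) = b * \<rho> * \<pi> powi (- \<delta> - 1) + \<rho> * ((u - b) * \<pi> powi (- \<delta> - 1))"
      unfolding pe by (simp add: algebra_simps)
    then have "c\<pi> = trace G (b * \<rho> * \<pi> powi (- \<delta> - 1)) + trace G (\<rho> * ((u - b) * \<pi> powi (- \<delta> - 1)))"
      unfolding c\<pi>_def by (simp add: trace_add)
    also have "\<dots> = b * \<rho> * t + \<rho> * trace G ((u - b) * \<pi> powi (- \<delta> - 1))"
      unfolding t_def using bk \<rho>(1) sub_k
      by (simp add: trace_mult_k subf_mult mult.assoc)
    finally show ?thesis .
  qed
  have B: "vg v (\<rho> * trace G ((u - b) * \<pi> powi (- \<delta> - 1))) (int n)"
  proof -
    have "vg v ((u - b) * \<pi> powi (- \<delta> - 1)) (- \<delta>)"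
      using vg_mult[OF b(3) vg_v[of "\<pi> powi (- \<delta> - 1)"]] by (simp add: v_pi_powi)
    then have "vg v (trace G ((u - b) * \<pi> powi (- \<delta> - 1))) 0"
      using delta_char codiff_trace by blast
    then show ?thesis using vg_mult[OF vg_v[of \<rho>]] \<rho> by fastforce
  qed
  have A: "b * \<rho> * t \<noteq> 0" "v (b * \<rho> * t) \<le> 0"
    using b0 \<rho> t0 vt by (auto simp: v_mult)
  have "c\<pi> \<noteq> 0 \<and> v c\<pi> = v (b * \<rho> * t)"
  proof -
    have "v (b * \<rho> * t) + 1 \<le> int n" using A(2) n_pos by linarith
    then have "vg v (\<rho> * trace G ((u - b) * \<pi> powi (- \<delta> - 1))) (v (b * \<rho> * t) + 1)"
      using B vg_mono by blast
    then show ?thesis unfolding cp using strict_add[OF A(1)] by blast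
  qed
  moreover have "vg v c\<pi> 0"
  proof -
    have "\<pi> powi (- d) \<in> codifferent v G k" unfolding delta_char using d_eq n_pos
      by (simp add: vg_def v_pi_powi)
    then show ?thesis unfolding c\<pi>_def by (rule codiff_trace)
  qed
  ultimately show ?thesis using A by (auto simp: vg_def)
qed

lemma r_c\<pi>: "r c\<pi> \<noteq> 0" using c\<pi>_unit r_unit by blast

end


context setting
begin

lemma vg_cong: "vg v x N \<Longrightarrow> N = M \<Longrightarrow> vg v x M" by simp

lemma vg_div: "w \<noteq> 0 \<Longrightarrow> vg v x (N + v w) \<Longrightarrow> vg v (x / w) N"
  by (cases "x = 0") (auto simp: vg_def v_divide)

lemma vg_div_iff: "w \<noteq> 0 \<Longrightarrow> vg v (x / w) N \<longleftrightarrow> vg v x (N + v w)"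
  by (cases "x = 0") (auto simp: vg_def v_divide)

lemma act_sum_f: "act G (\<lambda>\<sigma>. \<Sum>b\<in>S. g b \<sigma>) x = (\<Sum>b\<in>S. act G (g b) x)"
  unfolding act_def by (simp add: sum_distrib_right) (rule sum.swap)

lemma coeff_pmap: "coeff (pmap G r n \<pi> c\<pi> i f) m =
   (if m < n then inverse (r c\<pi>) * r (act G f (\<pi> powi (int m - i)) / \<pi> ^ m) else 0)"
proof -
  have "coeff (\<Sum>j<n. monom (r (act G f (\<pi> powi (int j - i)) / \<pi> ^ j)) j) m
      = (\<Sum>j<n. if j = m then r (act G f (\<pi> powi (int j - i)) / \<pi> ^ j) else 0)"
    unfolding coeff_sum by (simp add: coeff_monom)
  also have "\<dots> = (if m < n then r (act G f (\<pi> powi (int m - i)) / \<pi> ^ m) else 0)"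
    by (simp add: sum.delta)
  finally show ?thesis unfolding pmap_def by simp
qed

lemma coeff_arg_O: "f \<in> Cset v G i \<Longrightarrow> vg v (act G f (\<pi> powi (int m - i)) / \<pi> ^ m) 0"
proof -
  assume f: "f \<in> Cset v G i"
  have "vg v (act G f (\<pi> powi (int m - i))) (v (\<pi> powi (int m - i)) + i)"
    using CsetD[OF f pi_powi_nz] .
  then have h: "vg v (act G f (\<pi> powi (int m - i))) (0 + v (\<pi> ^ m))"
    by (rule vg_cong) (use unif in \<open>simp add: v_pi_powi v_power\<close>)
  show ?thesis by (rule vg_div[OF _ h]) (use unif in simp)
qed

lemma pmap_zero: "f \<in> Cset v G (i + 1) \<Longrightarrow> pmap G r n \<pi> c\<pi> i f = 0"
proof -
  assume f: "f \<in> Cset v G (i + 1)"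
  have "r (act G f (\<pi> powi (int m - i)) / \<pi> ^ m) = 0" for m
  proof -
    have "vg v (act G f (\<pi> powi (int m - i))) (v (\<pi> powi (int m - i)) + (i + 1))"
      using CsetD[OF f pi_powi_nz] .
    then have h0: "vg v (act G f (\<pi> powi (int m - i))) (1 + v (\<pi> ^ m))"
      by (rule vg_cong) (use unif in \<open>simp add: v_pi_powi v_power\<close>)
    have h: "vg v (act G f (\<pi> powi (int m - i)) / \<pi> ^ m) 1" by (rule vg_div[OF _ h0]) (use unif in simp)
    then show ?thesis using r_zero_iff[of "act G f (\<pi> powi (int m - i)) / \<pi> ^ m"] vg_mono[OF h] by simp
  qed
  then show ?thesis by (simp add: poly_eq_iff coeff_pmap)
qed

lemma act_expand:
  assumes x: "x \<noteq> 0"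
  shows "\<exists>a. (\<forall>j<n. a j \<in> k \<and> vg v (a j) (v x + i - int j)) \<and>
     act G f x = (\<Sum>j<n. a j * act G f (\<pi> powi (int j - i)))"
proof -
  obtain a where a: "\<forall>j<n. a j \<in> k" "x * \<pi> powi i = (\<Sum>j<n. a j * \<pi> ^ j)" using basisK by blast
  have vx: "v (x * \<pi> powi i) = v x + i" using x pi_powi_nz by (simp add: v_mult v_pi_powi)
  have each: "\<forall>j<n. vg v (a j * \<pi> ^ j) (v x + i)"
    using expansion_vg[OF sub_k n_pos dvd_k unif a(1), of "v x + i"] a(2) vx vg_v[of "x * \<pi> powi i"] by simp
  have aj: "vg v (a j) (v x + i - int j)" if "j < n" for j
    using each[rule_format, OF that] vg_mult_iff[of "\<pi> ^ j" "a j"] unif by (simp add: v_power)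
  have xe: "x = (\<Sum>j<n. a j * \<pi> powi (int j - i))"
  proof -
    have "x = x * \<pi> powi i * \<pi> powi (- i)"
      using pi_powi_add[of i "- i"] by (simp add: mult.assoc)
    also have "\<dots> = (\<Sum>j<n. a j * (\<pi> ^ j * \<pi> powi (- i)))"
      unfolding a(2) by (simp add: sum_distrib_right mult.assoc)
    also have "\<dots> = (\<Sum>j<n. a j * \<pi> powi (int j - i))"
    proof (rule sum.cong)
      fix j
      have "\<pi> powi (int j + - i) = \<pi> powi (int j) * \<pi> powi (- i)" by (rule pi_powi_add)
      then show "a j * (\<pi> ^ j * \<pi> powi (- i)) = a j * \<pi> powi (int j - i)" by simp
    qed simp
    finally show ?thesis .
  qed
  have "act G f x = (\<Sum>j<n. a j * act G f (\<pi> powi (int j - i)))"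
  proof -
    have "act G f (\<Sum>j<n. a j * \<pi> powi (int j - i)) = (\<Sum>j<n. act G f (a j * \<pi> powi (int j - i)))"
      by (induction n) (auto simp: act_add_x act_zero_x)
    then show ?thesis using a(1) xe by (simp add: act_mult_k)
  qed
  then show ?thesis using a(1) aj by blast
qed

lemma pmap_zero_imp: "f \<in> Cset v G i \<Longrightarrow> pmap G r n \<pi> c\<pi> i f = 0 \<Longrightarrow> f \<in> Cset v G (i + 1)"
proof -
  assume f: "f \<in> Cset v G i" and p: "pmap G r n \<pi> c\<pi> i f = 0"
  have small: "vg v (act G f (\<pi> powi (int j - i))) (int j + 1)" if j: "j < n" for j
  proof -
    have "coeff (pmap G r n \<pi> c\<pi> i f) j = 0" using p by simp
    then have "r (act G f (\<pi> powi (int j - i)) / \<pi> ^ j) = 0"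
      using j r_c\<pi> by (simp add: coeff_pmap)
    then have "vg v (act G f (\<pi> powi (int j - i)) / \<pi> ^ j) 1"
      using r_zero_iff coeff_arg_O[OF f] by blast
    then show ?thesis using vg_div_iff[of "\<pi> ^ j"] unif by (simp add: v_power add.commute)
  qed
  show ?thesis
  proof (rule CsetI[OF Cset_inKG[OF f]])
    fix x :: 'K assume x: "x \<noteq> 0"
    obtain a where a: "\<forall>j<n. a j \<in> k \<and> vg v (a j) (v x + i - int j)"
      "act G f x = (\<Sum>j<n. a j * act G f (\<pi> powi (int j - i)))"
      using act_expand[OF x, of i f] by blast
    have "vg v (a j * act G f (\<pi> powi (int j - i))) (v x + (i + 1))" if "j < n" for j
      using vg_mult[of "a j" "v x + i - int j", OF _ small[OF that]] a(1) that by simp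
    then show "vg v (act G f x) (v x + (i + 1))" unfolding a(2) by (auto intro!: vg_sum)
  qed
qed

lemma act_unit:
  assumes f: "f \<in> Cset v G i" and u: "vg v u 0" and y: "y \<noteq> 0" and w: "w \<noteq> 0" "v w = v y + i"
  shows "r (act G f (u * y) / w) = r u * r (act G f y / w)"
proof -
  obtain a where a: "a \<in> k0" "vg v a 0" "r a = r u" "vg v (u - a) 1" using r_eq_lift[OF u] by blast
  have ak: "a \<in> k" using a(1) k0k by blast
  have e: "act G f (u * y) / w = a * (act G f y / w) + act G f ((u - a) * y) / w"
  proof -
    have "u * y = a * y + (u - a) * y" by (simp add: algebra_simps)
    then have "act G f (u * y) = a * act G f y + act G f ((u - a) * y)"
      using act_add_x act_mult_k[OF ak] by simp
    then show ?thesis by (simp add: add_divide_distrib)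
  qed
  have X: "vg v (act G f y / w) 0"
    using CsetD[OF f y] w by (intro vg_div) simp_all
  have Z: "vg v (act G f ((u - a) * y) / w) 1"
  proof (cases "(u - a) * y = 0")
    case True
    have "act G f ((u - a) * y) = 0" by (simp only: True act_zero_x)
    then show ?thesis by simp
  next
    case False
    then have ua: "u - a \<noteq> 0" by simp
    have "vg v (act G f ((u - a) * y)) (v ((u - a) * y) + i)" using CsetD[OF f False] .
    moreover have "v ((u - a) * y) \<ge> 1 + v y" using a(4) ua y by (simp add: v_mult vg_def)
    ultimately have "vg v (act G f ((u - a) * y)) (1 + v w)" using w(2) vg_mono by fastforce
    then show ?thesis by (rule vg_div[OF w(1)])
  qed
  have "r (act G f (u * y) / w) = r (a * (act G f y / w)) + r (act G f ((u - a) * y) / w)"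
    unfolding e using vg_mult[OF a(2) X] vg_mono[OF Z] by (intro r_add) auto
  also have "r (act G f ((u - a) * y) / w) = 0" using r_zero_iff vg_mono[OF Z] Z by simp
  finally show ?thesis using r_mult[OF a(2) X] a(3) by simp
qed

lemma pmap_scale:
  assumes c: "c \<in> k" "c \<noteq> 0" and f: "f \<in> Cset v G i"
  shows "pmap G r n \<pi> c\<pi> (i + v c) (\<lambda>\<sigma>. c * f \<sigma>) = smult (r (c * \<pi> powi (- v c))) (pmap G r n \<pi> c\<pi> i f)"
proof (subst poly_eq_iff, intro allI)
  fix m
  define u where "u = c * \<pi> powi (- v c)"
  have u: "vg v u 0" unfolding u_def using c pi_powi_nz by (simp add: vg_def v_mult v_pi_powi)
  have "act G (\<lambda>\<sigma>. c * f \<sigma>) (\<pi> powi (int m - (i + v c))) = act G f (u * \<pi> powi (int m - i))"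
  proof -
    have "u * \<pi> powi (int m - i) = c * \<pi> powi (int m - (i + v c))"
      unfolding u_def using pi_powi_add[of "- v c" "int m - i"] by (simp add: algebra_simps)
    then show ?thesis by (simp add: act_scale_f act_mult_k[OF c(1)])
  qed
  moreover have "r (act G f (u * \<pi> powi (int m - i)) / \<pi> ^ m) = r u * r (act G f (\<pi> powi (int m - i)) / \<pi> ^ m)"
    using act_unit[OF f u pi_powi_nz, of "\<pi> ^ m"] unif by (simp add: v_power v_pi_powi)
  ultimately show "coeff (pmap G r n \<pi> c\<pi> (i + v c) (\<lambda>\<sigma>. c * f \<sigma>)) m =
      coeff (smult (r (c * \<pi> powi (- v c))) (pmap G r n \<pi> c\<pi> i f)) m"
    unfolding coeff_pmap coeff_smult u_def by simp
qed

lemma pmap_sum: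
  assumes "\<And>b. b \<in> S \<Longrightarrow> g b \<in> Cset v G i"
  shows "pmap G r n \<pi> c\<pi> i (\<lambda>\<sigma>. \<Sum>b\<in>S. g b \<sigma>) = (\<Sum>b\<in>S. pmap G r n \<pi> c\<pi> i (g b))"
proof (subst poly_eq_iff, intro allI)
  fix m
  have "r (act G (\<lambda>\<sigma>. \<Sum>b\<in>S. g b \<sigma>) (\<pi> powi (int m - i)) / \<pi> ^ m)
      = (\<Sum>b\<in>S. r (act G (g b) (\<pi> powi (int m - i)) / \<pi> ^ m))"
    unfolding act_sum_f sum_divide_distrib using assms coeff_arg_O by (intro r_sum) blast
  then show "coeff (pmap G r n \<pi> c\<pi> i (\<lambda>\<sigma>. \<Sum>b\<in>S. g b \<sigma>)) m = coeff (\<Sum>b\<in>S. pmap G r n \<pi> c\<pi> i (g b)) m"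
    unfolding coeff_sum coeff_pmap by (simp add: sum_distrib_left)
qed

lemma pmap_diff:
  assumes "f \<in> Cset v G i" "g \<in> Cset v G i"
  shows "pmap G r n \<pi> c\<pi> i (\<lambda>\<sigma>. f \<sigma> - g \<sigma>) = pmap G r n \<pi> c\<pi> i f - pmap G r n \<pi> c\<pi> i g"
proof (subst poly_eq_iff, intro allI)
  fix m
  have "r (act G (\<lambda>\<sigma>. f \<sigma> - g \<sigma>) (\<pi> powi (int m - i)) / \<pi> ^ m)
      = r (act G f (\<pi> powi (int m - i)) / \<pi> ^ m) - r (act G g (\<pi> powi (int m - i)) / \<pi> ^ m)"
    unfolding act_diff_f diff_divide_distrib using assms coeff_arg_O by (intro r_diff) blast+
  then show "coeff (pmap G r n \<pi> c\<pi> i (\<lambda>\<sigma>. f \<sigma> - g \<sigma>)) m = coeff (pmap G r n \<pi> c\<pi> i f - pmap G r n \<pi> c\<pi> i g) m"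
    unfolding coeff_diff coeff_pmap by (simp add: right_diff_distrib)
qed

end


context setting
begin

abbreviation "dv f \<equiv> dval v G d f"
abbreviation "fp f \<equiv> frakp v G r n \<pi> c\<pi> d f"
abbreviation "pm i f \<equiv> pmap G r n \<pi> c\<pi> i f"

lemma zero_fun_lam: "(0 :: ('K \<Rightarrow> 'K) \<Rightarrow> 'K) = (\<lambda>\<sigma>. 0)" by (simp add: zero_fun_def)

lemma gi_elem: "graded_indep v G r n \<pi> c\<pi> d e0 B \<Longrightarrow> b \<in> B \<Longrightarrow> inKG G b \<and> b \<noteq> (\<lambda>\<sigma>. 0)"
  unfolding graded_indep_def zero_fun_lam by blast

lemma gi_indep: "graded_indep v G r n \<pi> c\<pi> d e0 B \<Longrightarrow>
   fam_indep UNIV smult {b\<in>B. dv b mod int e0 = s mod int e0} fp"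
  unfolding graded_indep_def by blast

lemma part1:
  assumes fB: "finite B" and gi: "graded_indep v G r n \<pi> c\<pi> d e0 B"
    and ck: "\<forall>b\<in>B. c b \<in> k0" and nz: "\<exists>b\<in>B. c b \<noteq> 0"
    and m_def: "m = Min {v (c b) + dv b | b. b \<in> B \<and> c b \<noteq> 0}"
    and f_def: "f = (\<lambda>\<sigma>. \<Sum>b\<in>B. c b * b \<sigma>)"
    and S_def: "S = {b\<in>B. c b \<noteq> 0 \<and> v (c b) + dv b = m}"
  shows "f \<noteq> 0 \<and> dv f = m \<and> f \<in> Cset v G (m + d) \<and> f \<notin> Cset v G (m + d + 1) \<and>
     (\<exists>lam. (\<forall>b\<in>S. lam b \<noteq> 0) \<and> fp f = (\<Sum>b\<in>S. smult (lam b) (fp b)))"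
proof -
  have bB: "inKG G b \<and> b \<noteq> (\<lambda>\<sigma>. 0)" if "b \<in> B" for b using gi_elem[OF gi that] .
  have ckk: "c b \<in> k" if "b \<in> B" for b using ck that k0k by blast
  define V where "V = {v (c b) + dv b | b. b \<in> B \<and> c b \<noteq> 0}"
  have fV: "finite V" unfolding V_def using fB by simp
  have neV: "V \<noteq> {}" unfolding V_def using nz by blast
  have mle: "m \<le> v (c b) + dv b" if "b \<in> B" "c b \<noteq> 0" for b
    unfolding m_def using fV that unfolding V_def by (intro Min_le) auto
  have "m \<in> V" unfolding m_def V_def[symmetric] using fV neV by simp
  then obtain b0 where b0: "b0 \<in> B" "c b0 \<noteq> 0" "v (c b0) + dv b0 = m" unfolding V_def by blast
  have b0S: "b0 \<in> S" unfolding S_def using b0 by simp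
  define t where "t b = (\<lambda>\<sigma>. c b * b \<sigma>)" for b
  have tC: "t b \<in> Cset v G (dv b + d + v (c b))" if "b \<in> B" "c b \<noteq> 0" for b
    unfolding t_def using Cset_scale[OF ckk[OF that(1)] that(2)] dval_char[of b] bB[OF that(1)] by blast
  have t0: "t b = (\<lambda>\<sigma>. 0)" if "c b = 0" for b unfolding t_def using that by simp
  have tCm: "t b \<in> Cset v G (m + d)" if "b \<in> B" for b
  proof (cases "c b = 0")
    case True
    then show ?thesis using t0 Cset_zero by simp
  next
    case False
    then show ?thesis using tC[OF that False] mle[OF that False] Cset_mono by (metis add.commute add_left_mono
          add.assoc)
  qed
  have tCm1: "t b \<in> Cset v G (m + d + 1)" if "b \<in> B" "b \<notin> S" for b
  proof (cases "c b = 0")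
    case True
    then show ?thesis using t0 Cset_zero by simp
  next
    case False
    then have "m + 1 \<le> v (c b) + dv b" using mle[OF that(1) False] that unfolding S_def by auto
    then show ?thesis using tC[OF that(1) False] Cset_mono by (metis add.commute add_left_mono add.assoc)
  qed
  have ff: "f = (\<lambda>\<sigma>. \<Sum>b\<in>B. t b \<sigma>)" unfolding f_def t_def by simp
  have fC: "f \<in> Cset v G (m + d)" unfolding ff using tCm by (intro Cset_sum)
  have SB: "S \<subseteq> B" unfolding S_def by blast
  define lam where "lam b = r (c b * \<pi> powi (- v (c b)))" for b
  have lam0: "lam b \<noteq> 0" if "b \<in> S" for b
  proof -
    have "c b \<noteq> 0" using that unfolding S_def by blast
    then show ?thesis unfolding lam_def using pi_powi_nz
      by (intro r_unit) (simp_all add: v_mult v_pi_powi)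
  qed
  have pf: "pm (m + d) f = (\<Sum>b\<in>S. smult (lam b) (fp b))"
  proof -
    have "pm (m + d) f = (\<Sum>b\<in>B. pm (m + d) (t b))" unfolding ff using tCm by (intro pmap_sum)
    also have "\<dots> = (\<Sum>b\<in>S. pm (m + d) (t b))"
      using fB SB tCm1 pmap_zero by (intro sum.mono_neutral_right) auto
    also have "\<dots> = (\<Sum>b\<in>S. smult (lam b) (fp b))"
    proof (rule sum.cong)
      fix b assume b: "b \<in> S"
      then have bb: "b \<in> B" "c b \<noteq> 0" "v (c b) + dv b = m" unfolding S_def by auto
      have "pm (dv b + d + v (c b)) (t b) = smult (lam b) (pm (dv b + d) b)"
        unfolding t_def lam_def using pmap_scale[OF ckk[OF bb(1)] bb(2), of b "dv b + d"] dval_char bB[OF bb(1)]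
        by blast
      moreover have "dv b + d + v (c b) = m + d" using bb by simp
      ultimately show "pm (m + d) (t b) = smult (lam b) (fp b)" unfolding frakp_def by simp
    qed simp
    finally show ?thesis .
  qed
  have Sclass: "S \<subseteq> {b\<in>B. dv b mod int e0 = m mod int e0}"
  proof
    fix b assume b: "b \<in> S"
    then have bb: "b \<in> B" "c b \<noteq> 0" "v (c b) + dv b = m" unfolding S_def by auto
    obtain q where q: "v (c b) = int e0 * q" using dvd_k0[of "c b"] ck bb by blast
    have "m = dv b + int e0 * q" using bb q by simp
    then have "m mod int e0 = dv b mod int e0" by simp
    then show "b \<in> {b\<in>B. dv b mod int e0 = m mod int e0}" using bb by simp
  qed
  have pne: "pm (m + d) f \<noteq> 0"
  proof
    assume "pm (m + d) f = 0"
    then have "(\<Sum>b\<in>S. smult (lam b) (fp b)) = 0" using pf by simp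
    moreover have "finite S" using fB SB finite_subset by blast
    ultimately have "lam b0 = 0"
      using fmod.indep_use[OF fmod_smult gi_indep[OF gi, of m], of S lam b0] Sclass b0S by blast
    then show False using lam0 b0S by blast
  qed
  have fC1: "f \<notin> Cset v G (m + d + 1)" using pne pmap_zero by blast
  have fK: "inKG G f" using Cset_inKG[OF fC] .
  have fnz: "f \<noteq> (\<lambda>\<sigma>. 0)" using fC1 Cset_zero by auto
  have dvf: "dv f = m" using dval_eqI[OF fK] fC fC1 by blast
  have "fp f = pm (m + d) f" unfolding frakp_def dvf by simp
  then show ?thesis using dvf fC fC1 fnz pf lam0 zero_fun_lam by auto
qed

end


lemma fmod_kg: "is_subfield F \<Longrightarrow> fmod F (kg_smult :: 'a::field \<Rightarrow> (('a \<Rightarrow> 'a) \<Rightarrow> 'a) \<Rightarrow> _)"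
  by unfold_locales (simp_all add: kg_smult_def fun_eq_iff algebra_simps)

lemma kg_sum: "(\<Sum>b\<in>B. kg_smult (c b) b) = (\<lambda>\<sigma>. \<Sum>b\<in>B. c b * b \<sigma>)"
proof (induction B rule: infinite_finite_induct)
  case (insert b B)
  then show ?case by (simp add: kg_smult_def fun_eq_iff)
qed (simp_all add: zero_fun_def)

lemma div_bounds:
  fixes D :: int and e :: nat
  assumes e: "e > 0"
  shows "((D - 1) div int e + 1) * int e \<ge> D"
    and "int e * w \<ge> D \<Longrightarrow> w \<ge> (D - 1) div int e + 1"
proof -
  have dm: "D - 1 = int e * ((D - 1) div int e) + (D - 1) mod int e" by simp
  have mlt: "(D - 1) mod int e < int e" using e by simp
  have mge: "(D - 1) mod int e \<ge> 0" using e by simp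
  have ex: "((D - 1) div int e + 1) * int e = int e * ((D - 1) div int e) + int e" by (simp add: algebra_simps)
  show "((D - 1) div int e + 1) * int e \<ge> D" unfolding ex using dm mlt by linarith
  assume h: "int e * w \<ge> D"
  have "int e * ((D - 1) div int e) < int e * w" using dm mge h by linarith
  then have "(D - 1) div int e < w" using e by (simp add: mult_less_cancel_left)
  then show "w \<ge> (D - 1) div int e + 1" by simp
qed

context setting
begin

lemma span_kg_iff:
  assumes fB: "finite B"
  shows "g \<in> fam_span k0 kg_smult B id \<longleftrightarrow> (\<exists>c. (\<forall>b\<in>B. c b \<in> k0) \<and> g = (\<lambda>\<sigma>. \<Sum>b\<in>B. c b * b \<sigma>))"
proof -
  interpret fmod k0 kg_smult by (rule fmod_kg[OF sub_k0])
  show ?thesis using span_repr[OF fB, of g id] by (simp add: kg_sum)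
qed

lemma part2:
  assumes fB: "finite B" and gi: "graded_indep v G r n \<pi> c\<pi> d e0 B"
  shows "Cset v G i \<inter> fam_span k0 kg_smult B id =
         {(\<lambda>\<sigma>. \<Sum>b\<in>B. c b * b \<sigma>) | c. \<forall>b\<in>B. \<exists>y\<in>val_ring v \<inter> k0.
             c b = \<pi>0 powi ((i - d - dv b - 1) div int e0 + 1) * y}"
  (is "?L = ?R")
proof
  show "?L \<subseteq> ?R"
  proof
    fix g assume g: "g \<in> ?L"
    then obtain c where c: "\<forall>b\<in>B. c b \<in> k0" "g = (\<lambda>\<sigma>. \<Sum>b\<in>B. c b * b \<sigma>)"
      using span_kg_iff[OF fB] by blast
    have gC: "g \<in> Cset v G i" using g by blast
    have "\<forall>b\<in>B. \<exists>y\<in>val_ring v \<inter> k0. c b = \<pi>0 powi ((i - d - dv b - 1) div int e0 + 1) * y"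
    proof (cases "\<exists>b\<in>B. c b \<noteq> 0")
      case False
      then show ?thesis using sub_k0 by (auto simp: subf_0 val_ring_def)
    next
      case True
      define m where "m = Min {v (c b) + dv b | b. b \<in> B \<and> c b \<noteq> 0}"
      have P: "g \<noteq> 0 \<and> dv g = m \<and> g \<in> Cset v G (m + d) \<and> g \<notin> Cset v G (m + d + 1)"
        using part1[OF fB gi c(1) True m_def c(2) refl] by blast
      have im: "i \<le> m + d"
      proof (rule ccontr)
        assume "\<not> i \<le> m + d"
        then have "g \<in> Cset v G (m + d + 1)" using gC Cset_mono by fastforce
        then show False using P by blast
      qed
      show ?thesis
      proof
        fix b assume b: "b \<in> B"
        define q where "q = (i - d - dv b - 1) div int e0 + 1"
        show "\<exists>y\<in>val_ring v \<inter> k0. c b = \<pi>0 powi q * y"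
        proof (cases "c b = 0")
          case True
          then show ?thesis using sub_k0 by (intro bexI[of _ 0]) (auto simp: subf_0 val_ring_def)
        next
          case False
          have "m \<le> v (c b) + dv b" unfolding m_def using fB b False by (intro Min_le) auto
          then have ge: "v (c b) \<ge> i - d - dv b" using im by simp
          obtain w where w: "v (c b) = int e0 * w" using dvd_k0[of "c b"] c b False by blast
          have "w \<ge> q" unfolding q_def using div_bounds(2)[OF e0_pos, of "i - d - dv b" w] ge w by simp
          define y where "y = c b / \<pi>0 powi q"
          have p0: "\<pi>0 powi q \<noteq> 0" using unif0 by (simp add: power_int_not_zero)
          have "v y = int e0 * w - q * int e0"
            unfolding y_def using False p0 w unif0 by (simp add: v_divide v_powi v_pi0)
          moreover have "q * int e0 \<le> w * int e0" using \<open>w \<ge> q\<close> by (intro mult_right_mono) auto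
          ultimately have "v y \<ge> 0" by (simp add: algebra_simps)
          moreover have "y \<in> k0" unfolding y_def using c b unif0 sub_k0 by (intro subf_divide subf_powi) auto
          moreover have "c b = \<pi>0 powi q * y" unfolding y_def using p0 by simp
          ultimately show ?thesis by (auto simp: val_ring_def)
        qed
      qed
    qed
    then show "g \<in> ?R" using c(2) by blast
  qed
next
  show "?R \<subseteq> ?L"
  proof
    fix g assume "g \<in> ?R"
    then obtain c where c: "g = (\<lambda>\<sigma>. \<Sum>b\<in>B. c b * b \<sigma>)"
      "\<forall>b\<in>B. \<exists>y\<in>val_ring v \<inter> k0. c b = \<pi>0 powi ((i - d - dv b - 1) div int e0 + 1) * y"
      by blast
    have ck: "c b \<in> k0" if "b \<in> B" for b
      using c(2) that unif0 sub_k0 by (auto intro!: subf_mult subf_powi)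
    have "g \<in> fam_span k0 kg_smult B id" using span_kg_iff[OF fB] ck c(1) by blast
    moreover have "g \<in> Cset v G i"
      unfolding c(1)
    proof (rule Cset_sum)
      fix b assume b: "b \<in> B"
      define q where "q = (i - d - dv b - 1) div int e0 + 1"
      obtain y where y: "y \<in> val_ring v" "y \<in> k0" "c b = \<pi>0 powi q * y" using c(2) b unfolding q_def by blast
      have vq: "vg v (c b) (q * int e0)"
      proof -
        have "vg v (\<pi>0 powi q) (q * int e0)" using unif0 by (simp add: vg_def v_powi v_pi0)
        moreover have "vg v y 0" using y(1) by (simp add: O_iff)
        ultimately show ?thesis using vg_mult y(3) by fastforce
      qed
      have bC: "b \<in> Cset v G (dv b + d)" using dval_char gi_elem[OF gi b] by blast
      have "(\<lambda>\<sigma>. c b * b \<sigma>) \<in> Cset v G (dv b + d + q * int e0)"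
        using Cset_scale0[OF k0_sub_k[OF ck[OF b]] bC vq] .
      moreover have "dv b + d + q * int e0 \<ge> i"
        using div_bounds(1)[OF e0_pos, of "i - d - dv b"] unfolding q_def by simp
      ultimately show "(\<lambda>\<sigma>. c b * b \<sigma>) \<in> Cset v G i" using Cset_mono by blast
    qed
    ultimately show "g \<in> ?L" by blast
  qed
qed

end


context setting
begin

lemma fp_span: "fp f \<in> fam_span UNIV smult {..<n} (\<lambda>j. monom 1 j)"
proof -
  interpret pm: fmod "UNIV :: 'r set" smult by (rule fmod_smult)
  define a where "a j = inverse (r c\<pi>) * r (act G f (\<pi> powi (int j - (dv f + d))) / \<pi> ^ j)" for j
  have "fp f = (\<Sum>j<n. smult (a j) (monom 1 j))"
  proof (subst poly_eq_iff, intro allI)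
    fix m
    have "coeff (\<Sum>j<n. smult (a j) (monom 1 j)) m = (\<Sum>j<n. if j = m then a m else 0)"
      unfolding coeff_sum by (intro sum.cong) auto
    also have "\<dots> = (if m < n then a m else 0)" by (simp add: sum.delta)
    finally show "coeff (fp f) m = coeff (\<Sum>j<n. smult (a j) (monom 1 j)) m"
      unfolding frakp_def coeff_pmap a_def by simp
  qed
  then show ?thesis by (subst pm.span_repr) auto
qed

lemma gi_card:
  assumes gi: "graded_indep v G r n \<pi> c\<pi> d e0 B"
  shows "finite B \<and> card B \<le> e0 * n"
proof -
  interpret pm: fmod "UNIV :: 'r set" smult by (rule fmod_smult)
  define Bs where "Bs s = {b\<in>B. dv b mod int e0 = s mod int e0}" for s
  have each: "finite (Bs s) \<and> card (Bs s) \<le> n" for s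
  proof -
    have "fam_indep UNIV smult (Bs s) fp" unfolding Bs_def by (rule gi_indep[OF gi])
    moreover have "\<forall>b\<in>Bs s. fp b \<in> fam_span UNIV smult {..<n} (\<lambda>j. monom 1 j)" using fp_span by blast
    ultimately show ?thesis using pm.steinitz[of "Bs s" fp "{..<n}"] by simp
  qed
  have BU: "B = (\<Union>s\<in>{0..<int e0}. Bs s)"
  proof
    show "B \<subseteq> (\<Union>s\<in>{0..<int e0}. Bs s)"
    proof
      fix b assume b: "b \<in> B"
      have "dv b mod int e0 \<in> {0..<int e0}" using e0_pos by simp
      moreover have "b \<in> Bs (dv b mod int e0)" unfolding Bs_def using b by simp
      ultimately show "b \<in> (\<Union>s\<in>{0..<int e0}. Bs s)" by blast
    qed
  qed (auto simp: Bs_def)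
  have "finite B" using BU each by (metis finite_UN finite_atLeastLessThan_int)
  moreover have "card B \<le> (\<Sum>s\<in>{0..<int e0}. card (Bs s))" unfolding BU by (rule card_UN_le) simp
  moreover have "(\<Sum>s\<in>{0..<int e0}. card (Bs s)) \<le> (\<Sum>s\<in>{0..<int e0}. n)" using each by (intro sum_mono) auto
  ultimately show ?thesis by (simp add: mult.commute)
qed

lemma gi_insert:
  assumes gi: "graded_indep v G r n \<pi> c\<pi> d e0 B" and g: "inKG G g" "g \<noteq> (\<lambda>\<sigma>. 0)" "g \<notin> B"
    and nsp: "fp g \<notin> fam_span UNIV smult {b\<in>B. dv b mod int e0 = dv g mod int e0} fp"
  shows "graded_indep v G r n \<pi> c\<pi> d e0 (insert g B)"
proof -
  interpret pm: fmod "UNIV :: 'r set" smult by (rule fmod_smult)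
  have sub: "insert g B \<subseteq> {f. inKG G f \<and> f \<noteq> 0}" using gi g unfolding graded_indep_def zero_fun_lam by auto
  have "fam_indep UNIV smult {b\<in>insert g B. dv b mod int e0 = s mod int e0} fp" for s
  proof (cases "dv g mod int e0 = s mod int e0")
    case True
    have eq: "{b\<in>insert g B. dv b mod int e0 = s mod int e0} = insert g {b\<in>B. dv b mod int e0 = dv g mod int e0}"
      using True by auto
    show ?thesis unfolding eq
      by (rule pm.indep_insert[OF gi_indep[OF gi] nsp]) (use g in auto)
  next
    case False
    have eq: "{b\<in>insert g B. dv b mod int e0 = s mod int e0} = {b\<in>B. dv b mod int e0 = s mod int e0}"
      using False by auto
    show ?thesis unfolding eq by (rule gi_indep[OF gi])
  qed
  then show ?thesis using sub unfolding graded_indep_def by blast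
qed

lemma lift_term:
  assumes b: "inKG G b" "b \<noteq> (\<lambda>\<sigma>. 0)"
  shows "\<exists>c\<in>k0. vg v c (int e0 * q) \<and>
    pm (dv b + d + int e0 * q) (\<lambda>\<sigma>. c * b \<sigma>) = smult \<mu> (fp b)"
proof (cases "\<mu> = 0")
  case True
  have "pm (dv b + d + int e0 * q) (\<lambda>\<sigma>. 0 * b \<sigma>) = 0" using pmap_zero Cset_zero by simp
  then show ?thesis using True sub_k0 by (intro bexI[of _ 0]) (auto simp: subf_0)
next
  case False
  define t where "t = int e0 * q"
  define u where "u = \<pi>0 powi q * \<pi> powi (- t)"
  have p0: "\<pi>0 powi q \<noteq> 0" using unif0 by (simp add: power_int_not_zero)
  have u0: "u \<noteq> 0" "v u = 0" unfolding u_def t_def using p0 pi_powi_nz unif0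
    by (auto simp: v_mult v_powi v_pi_powi v_pi0)
  have uO: "vg v u 0" using u0 by (simp add: vg_def)
  have ru: "r u \<noteq> 0" using r_unit u0 by blast
  obtain x where x: "vg v x 0" "r x = \<mu> / r u" using r_surj by blast
  obtain a where a: "a \<in> k0" "vg v a 0" "r a = \<mu> / r u" using r_eq_lift[OF x(1)] x(2) by metis
  have ra: "r a \<noteq> 0" using a(3) False ru by simp
  have a0: "a \<noteq> 0" using ra r_zero by auto
  have va: "v a = 0"
  proof -
    have "\<not> vg v a 1" using r_zero_iff[OF a(2)] ra by simp
    then show ?thesis using a(2) a0 by (simp add: vg_def)
  qed
  define c where "c = \<pi>0 powi q * a"
  have ck0: "c \<in> k0" unfolding c_def using a(1) unif0 sub_k0 by (intro subf_mult subf_powi) auto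
  have c0: "c \<noteq> 0" unfolding c_def using p0 a0 by simp
  have vc: "v c = t" unfolding c_def t_def using p0 a0 va unif0 by (simp add: v_mult v_powi v_pi0)
  have bC: "b \<in> Cset v G (dv b + d)" using dval_char b by blast
  have "pm (dv b + d + v c) (\<lambda>\<sigma>. c * b \<sigma>) = smult (r (c * \<pi> powi (- v c))) (pm (dv b + d) b)"
    by (rule pmap_scale[OF k0_sub_k[OF ck0] c0 bC])
  moreover have "c * \<pi> powi (- v c) = u * a"
  proof -
    have "c * \<pi> powi (- v c) = c * \<pi> powi (- t)" using vc by simp
    also have "\<dots> = u * a" unfolding c_def u_def by (simp add: algebra_simps)
    finally show ?thesis .
  qed
  moreover have "r (u * a) = \<mu>" using r_mult[OF uO a(2)] a(3) ru by simp
  ultimately have "pm (dv b + d + t) (\<lambda>\<sigma>. c * b \<sigma>) = smult \<mu> (fp b)" unfolding frakp_def vc by simp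
  moreover have "vg v c t" using vc by (simp add: vg_def)
  ultimately show ?thesis using ck0 unfolding t_def by blast
qed

lemma improve:
  assumes fB: "finite B" and gi: "graded_indep v G r n \<pi> c\<pi> d e0 B"
    and g: "inKG G g" "g \<in> Cset v G (N + d)" "g \<notin> Cset v G (N + d + 1)"
    and sp: "fp g \<in> fam_span UNIV smult {b\<in>B. dv b mod int e0 = dv g mod int e0} fp"
  shows "\<exists>h\<in>fam_span k0 kg_smult B id. (\<lambda>\<sigma>. g \<sigma> - h \<sigma>) \<in> Cset v G (N + d + 1)"
proof -
  interpret pm: fmod "UNIV :: 'r set" smult by (rule fmod_smult)
  interpret kgm: fmod k0 kg_smult by (rule fmod_kg[OF sub_k0])
  have g0: "g \<noteq> (\<lambda>\<sigma>. 0)" using g(3) Cset_zero by auto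
  have dg: "dv g = N" using dval_eqI[OF g] .
  define Cl where "Cl = {b\<in>B. dv b mod int e0 = N mod int e0}"
  have fCl: "finite Cl" unfolding Cl_def using fB by simp
  obtain \<mu> where \<mu>: "fp g = (\<Sum>b\<in>Cl. smult (\<mu> b) (fp b))"
    using sp pm.span_repr[OF fCl] unfolding Cl_def dg by auto
  have "\<forall>b\<in>Cl. \<exists>c\<in>k0. vg v c (int e0 * ((N - dv b) div int e0)) \<and>
      pm (dv b + d + int e0 * ((N - dv b) div int e0)) (\<lambda>\<sigma>. c * b \<sigma>) = smult (\<mu> b) (fp b)"
    using lift_term gi_elem[OF gi] unfolding Cl_def by blast
  then obtain c where c: "\<And>b. b \<in> Cl \<Longrightarrow> c b \<in> k0 \<and> vg v (c b) (int e0 * ((N - dv b) div int e0)) \<and>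
      pm (dv b + d + int e0 * ((N - dv b) div int e0)) (\<lambda>\<sigma>. c b * b \<sigma>) = smult (\<mu> b) (fp b)"
    by metis
  have ex: "dv b + d + int e0 * ((N - dv b) div int e0) = N + d" if "b \<in> Cl" for b
  proof -
    have "N mod int e0 = dv b mod int e0" using that unfolding Cl_def by simp
    then have "int e0 dvd N - dv b" by (simp add: mod_eq_dvd_iff)
    then show ?thesis by simp
  qed
  define h where "h = (\<lambda>\<sigma>. \<Sum>b\<in>Cl. c b * b \<sigma>)"
  have hsp: "h \<in> fam_span k0 kg_smult B id"
  proof -
    have he: "h = (\<Sum>b\<in>Cl. kg_smult (c b) (id b))" unfolding h_def using kg_sum[of c Cl] by simp
    have "Cl \<subseteq> B" unfolding Cl_def by blast
    moreover have "\<forall>b\<in>Cl. c b \<in> k0" using c by blast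
    ultimately show ?thesis using kgm.span_intro[OF fCl _ _ he] by blast
  qed
  have tC: "(\<lambda>\<sigma>. c b * b \<sigma>) \<in> Cset v G (N + d)" if b: "b \<in> Cl" for b
  proof -
    have bB: "b \<in> B" using b unfolding Cl_def by blast
    have "b \<in> Cset v G (dv b + d)" using dval_char gi_elem[OF gi bB] by blast
    then have "(\<lambda>\<sigma>. c b * b \<sigma>) \<in> Cset v G (dv b + d + int e0 * ((N - dv b) div int e0))"
      using Cset_scale0[OF k0_sub_k, of "c b" b "dv b + d"] c[OF b] by blast
    then show ?thesis using ex[OF b] by simp
  qed
  have hC: "h \<in> Cset v G (N + d)" unfolding h_def using tC by (intro Cset_sum)
  have "pm (N + d) h = (\<Sum>b\<in>Cl. pm (N + d) (\<lambda>\<sigma>. c b * b \<sigma>))" unfolding h_def using tC by (intro pmap_sum)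
  also have "\<dots> = (\<Sum>b\<in>Cl. smult (\<mu> b) (fp b))" using c ex by (intro sum.cong) auto
  also have "\<dots> = pm (N + d) g" using \<mu> unfolding frakp_def dg by simp
  finally have "pm (N + d) (\<lambda>\<sigma>. g \<sigma> - h \<sigma>) = 0" using pmap_diff[OF g(2) hC] by simp
  then have "(\<lambda>\<sigma>. g \<sigma> - h \<sigma>) \<in> Cset v G (N + d + 1)"
    using pmap_zero_imp[OF Cset_diff[OF g(2) hC]] by simp
  then show ?thesis using hsp by blast
qed

end


lemma fin_ev:
  fixes P :: "'a \<Rightarrow> nat \<Rightarrow> bool"
  assumes "finite B" "\<forall>b\<in>B. \<exists>M. \<forall>j\<ge>M. P b j"
  shows "\<exists>M. \<forall>b\<in>B. \<forall>j\<ge>M. P b j"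
  using assms
proof (induction B rule: finite_induct)
  case (insert b B)
  then obtain M1 where M1: "\<forall>b\<in>B. \<forall>j\<ge>M1. P b j" by blast
  obtain M2 where M2: "\<forall>j\<ge>M2. P b j" using insert.prems by blast
  show ?case using M1 M2 by (intro exI[of _ "max M1 M2"]) auto
qed simp

lemma sub_sum:
  assumes L: "is_subspace F sm L" and h: "\<forall>t\<in>T. c t \<in> F \<and> x t \<in> L"
  shows "(\<Sum>t\<in>T. sm (c t) (x t)) \<in> L"
  using h
proof (induction T rule: infinite_finite_induct)
  case (insert t T)
  then have "sm (c t) (x t) \<in> L" "(\<Sum>t\<in>T. sm (c t) (x t)) \<in> L" using L unfolding is_subspace_def by auto
  then show ?case using L insert.hyps unfolding is_subspace_def by simp
qed (use L in \<open>auto simp: is_subspace_def\<close>)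

lemma vclose_vg: "vclose v N x y \<longleftrightarrow> vg v (x - y) N"
  unfolding vclose_def vg_def by auto

context setting
begin

lemma span_inKG:
  assumes fB: "finite B" and gi: "graded_indep v G r n \<pi> c\<pi> d e0 B" and h: "h \<in> fam_span k0 kg_smult B id"
  shows "inKG G h"
proof -
  obtain c where c: "h = (\<lambda>\<sigma>. \<Sum>b\<in>B. c b * b \<sigma>)" using h span_kg_iff[OF fB] by blast
  show ?thesis unfolding c using gi_elem[OF gi] by (intro inKG_lin) blast
qed

lemma bounded_dist:
  assumes fB: "finite B" and gi: "graded_indep v G r n \<pi> c\<pi> d e0 B"
    and f: "inKG G f" and nsp: "f \<notin> fam_span k0 kg_smult B id"
  shows "\<exists>N0. \<forall>h\<in>fam_span k0 kg_smult B id. (\<lambda>\<sigma>. f \<sigma> - h \<sigma>) \<notin> Cset v G N0"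
proof (rule ccontr)
  interpret kgm: fmod k0 kg_smult by (rule fmod_kg[OF sub_k0])
  assume "\<not> ?thesis"
  then have H: "\<forall>j::nat. \<exists>h. h \<in> fam_span k0 kg_smult B id \<and> (\<lambda>\<sigma>. f \<sigma> - h \<sigma>) \<in> Cset v G (int j)" by blast
  then obtain hs where hs0: "\<forall>j. hs j \<in> fam_span k0 kg_smult B id \<and> (\<lambda>\<sigma>. f \<sigma> - hs j \<sigma>) \<in> Cset v G (int j)"
    using choice[OF H] by blast
  have hs: "hs j \<in> fam_span k0 kg_smult B id \<and> (\<lambda>\<sigma>. f \<sigma> - hs j \<sigma>) \<in> Cset v G (int j)" for j
    using hs0 by blast
  have CC: "\<forall>j. \<exists>c. (\<forall>b\<in>B. c b \<in> k0) \<and> hs j = (\<lambda>\<sigma>. \<Sum>b\<in>B. c b * b \<sigma>)"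
    using hs span_kg_iff[OF fB] by blast
  obtain cs where cs0: "\<forall>j. (\<forall>b\<in>B. cs j b \<in> k0) \<and> hs j = (\<lambda>\<sigma>. \<Sum>b\<in>B. cs j b * b \<sigma>)"
    using choice[OF CC] by blast
  have cs: "(\<forall>b\<in>B. cs j b \<in> k0) \<and> hs j = (\<lambda>\<sigma>. \<Sum>b\<in>B. cs j b * b \<sigma>)" for j
    using cs0 by blast
  have key: "vg v (cs i b - cs j b) (int M - d - dv b)" if ij: "i \<ge> M" "j \<ge> M" and b: "b \<in> B" for i j M b
  proof -
    define c' where "c' b = cs i b - cs j b" for b
    have c'k: "\<forall>b\<in>B. c' b \<in> k0" unfolding c'_def using cs sub_k0 by (auto intro: subf_diff)
    have Deq: "(\<lambda>\<sigma>. \<Sum>b\<in>B. c' b * b \<sigma>) = (\<lambda>\<sigma>. (f \<sigma> - hs j \<sigma>) - (f \<sigma> - hs i \<sigma>))"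
    proof (rule ext)
      fix \<sigma>
      have "(\<Sum>b\<in>B. c' b * b \<sigma>) = (\<Sum>b\<in>B. cs i b * b \<sigma>) - (\<Sum>b\<in>B. cs j b * b \<sigma>)"
        unfolding c'_def by (simp add: left_diff_distrib sum_subtractf)
      also have "\<dots> = hs i \<sigma> - hs j \<sigma>" using cs[of i] cs[of j] by simp
      finally show "(\<Sum>b\<in>B. c' b * b \<sigma>) = (f \<sigma> - hs j \<sigma>) - (f \<sigma> - hs i \<sigma>)" by simp
    qed
    have a1: "(\<lambda>\<sigma>. f \<sigma> - hs j \<sigma>) \<in> Cset v G (int M)"
      using hs[of j] ij Cset_mono[of _ "int j" "int M"] by simp
    have a2: "(\<lambda>\<sigma>. f \<sigma> - hs i \<sigma>) \<in> Cset v G (int M)"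
      using hs[of i] ij Cset_mono[of _ "int i" "int M"] by simp
    have "(\<lambda>\<sigma>. (f \<sigma> - hs j \<sigma>) - (f \<sigma> - hs i \<sigma>)) \<in> Cset v G (int M)"
      using Cset_diff[OF a1 a2] by simp
    then have DC: "(\<lambda>\<sigma>. \<Sum>b\<in>B. c' b * b \<sigma>) \<in> Cset v G (int M)" using Deq by simp
    show ?thesis
    proof (cases "c' b = 0")
      case True
      then show ?thesis unfolding c'_def by simp
    next
      case False
      define m where "m = Min {v (c' b) + dv b | b. b \<in> B \<and> c' b \<noteq> 0}"
      have P: "(\<lambda>\<sigma>. \<Sum>b\<in>B. c' b * b \<sigma>) \<noteq> 0 \<and> dv (\<lambda>\<sigma>. \<Sum>b\<in>B. c' b * b \<sigma>) = m"
        using part1[OF fB gi c'k _ m_def refl refl] False b by blast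
      have K: "inKG G (\<lambda>\<sigma>. \<Sum>b\<in>B. c' b * b \<sigma>)" using Cset_inKG[OF DC] .
      have P0: "(\<lambda>\<sigma>. \<Sum>b\<in>B. c' b * b \<sigma>) \<noteq> (\<lambda>\<sigma>. 0)" using P zero_fun_lam by simp
      have "int M \<le> dv (\<lambda>\<sigma>. \<Sum>b\<in>B. c' b * b \<sigma>) + d" using Cset_dval_iff[OF K P0] DC by blast
      then have "int M \<le> m + d" using P by simp
      moreover have "m \<le> v (c' b) + dv b" unfolding m_def using fB b False by (intro Min_le) auto
      ultimately show ?thesis unfolding c'_def using False c'_def by (simp add: vg_def)
    qed
  qed
  have lim: "\<exists>l\<in>k0. \<forall>N. \<exists>M. \<forall>j\<ge>M. vclose v N (cs j b) l" if b: "b \<in> B" for b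
  proof -
    have "\<forall>N. \<exists>M. \<forall>i\<ge>M. \<forall>j\<ge>M. vclose v N (cs i b) (cs j b)"
    proof
      fix N
      define M where "M = nat (N + d + dv b)"
      have "\<forall>i\<ge>M. \<forall>j\<ge>M. vclose v N (cs i b) (cs j b)"
      proof (intro allI impI)
        fix i j assume "i \<ge> M" "j \<ge> M"
        then have "vg v (cs i b - cs j b) (int M - d - dv b)" using key b by blast
        moreover have "N \<le> int M - d - dv b" unfolding M_def by linarith
        ultimately show "vclose v N (cs i b) (cs j b)" unfolding vclose_vg using vg_mono by blast
      qed
      then show "\<exists>M. \<forall>i\<ge>M. \<forall>j\<ge>M. vclose v N (cs i b) (cs j b)" by blast
    qed
    moreover have "\<forall>j. cs j b \<in> k0" using cs b by blast
    moreover have C: "\<forall>s::nat \<Rightarrow> 'K. (\<forall>j. s j \<in> k0) \<and> (\<forall>N. \<exists>M. \<forall>i\<ge>M. \<forall>j\<ge>M. vclose v N (s i) (s j))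
      \<longrightarrow> (\<exists>l\<in>k0. \<forall>N. \<exists>M. \<forall>j\<ge>M. vclose v N (s j) l)"
      using compl_k0 unfolding v_complete_def by blast
    ultimately show ?thesis using spec[OF C, of "\<lambda>j. cs j b"] by blast
  qed
  have LL: "\<forall>b\<in>B. \<exists>l. l \<in> k0 \<and> (\<forall>N. \<exists>M. \<forall>j\<ge>M. vclose v N (cs j b) l)" using lim by blast
  obtain l where l0: "\<forall>b\<in>B. l b \<in> k0 \<and> (\<forall>N. \<exists>M. \<forall>j\<ge>M. vclose v N (cs j b) (l b))"
    using bchoice[OF LL] by blast
  have l: "l b \<in> k0 \<and> (\<forall>N. \<exists>M. \<forall>j\<ge>M. vclose v N (cs j b) (l b))" if "b \<in> B" for b
    using l0 that by blast
  define h where "h = (\<lambda>\<sigma>. \<Sum>b\<in>B. l b * b \<sigma>)"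
  have hsp: "h \<in> fam_span k0 kg_smult B id" unfolding h_def using span_kg_iff[OF fB] l by blast
  have all: "(\<lambda>\<sigma>. f \<sigma> - h \<sigma>) \<in> Cset v G N" for N
  proof -
    have EV: "\<forall>b\<in>B. \<exists>M. \<forall>j\<ge>M. vclose v (N - d - dv b) (cs j b) (l b)" using l by blast
    obtain M where M: "\<forall>b\<in>B. \<forall>j\<ge>M. vclose v (N - d - dv b) (cs j b) (l b)"
      using fin_ev[OF fB, of "\<lambda>b j. vclose v (N - d - dv b) (cs j b) (l b)"] EV by blast
    define j where "j = max M (nat N)"
    have t1: "(\<lambda>\<sigma>. f \<sigma> - hs j \<sigma>) \<in> Cset v G N"
      using hs[of j] Cset_mono[of _ "int j" N] unfolding j_def by simp
    have t2: "(\<lambda>\<sigma>. \<Sum>b\<in>B. (cs j b - l b) * b \<sigma>) \<in> Cset v G N"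
    proof (rule Cset_sum)
      fix b assume b: "b \<in> B"
      have "cs j b \<in> k0" "l b \<in> k0" using cs l b by auto
      then have cj: "cs j b - l b \<in> k" using sub_k0 k0_sub_k subf_diff by blast
      have "j \<ge> M" unfolding j_def by simp
      then have "vg v (cs j b - l b) (N - d - dv b)" using M b unfolding vclose_vg by blast
      moreover have "b \<in> Cset v G (dv b + d)" using dval_char gi_elem[OF gi b] by blast
      ultimately have "(\<lambda>\<sigma>. (cs j b - l b) * b \<sigma>) \<in> Cset v G (dv b + d + (N - d - dv b))"
        using Cset_scale0[OF cj] by blast
      then show "(\<lambda>\<sigma>. (cs j b - l b) * b \<sigma>) \<in> Cset v G N" by simp
    qed
    have "(\<lambda>\<sigma>. f \<sigma> - h \<sigma>) = (\<lambda>\<sigma>. (f \<sigma> - hs j \<sigma>) + (\<Sum>b\<in>B. (cs j b - l b) * b \<sigma>))"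
    proof (rule ext)
      fix \<sigma>
      have "(\<Sum>b\<in>B. (cs j b - l b) * b \<sigma>) = (\<Sum>b\<in>B. cs j b * b \<sigma>) - (\<Sum>b\<in>B. l b * b \<sigma>)"
        by (simp add: left_diff_distrib sum_subtractf)
      also have "\<dots> = hs j \<sigma> - h \<sigma>" using cs[of j] unfolding h_def by simp
      finally show "f \<sigma> - h \<sigma> = (f \<sigma> - hs j \<sigma>) + (\<Sum>b\<in>B. (cs j b - l b) * b \<sigma>)" by simp
    qed
    then show ?thesis using Cset_add[OF t1 t2] by simp
  qed
  have hK: "inKG G h" using span_inKG[OF fB gi hsp] .
  have nz: "(\<lambda>\<sigma>. f \<sigma> - h \<sigma>) \<noteq> (\<lambda>\<sigma>. 0)"
  proof
    assume "(\<lambda>\<sigma>. f \<sigma> - h \<sigma>) = (\<lambda>\<sigma>. 0)"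
    then have "f = h" by (simp add: fun_eq_iff)
    then show False using nsp hsp by simp
  qed
  show False using Cset_notall[OF inKG_diff[OF f hK] nz] all by blast
qed

end


context setting
begin

lemma gi_empty: "graded_indep v G r n \<pi> c\<pi> d e0 {}"
  unfolding graded_indep_def fam_indep_def by auto

lemma part3:
  assumes LK: "L \<subseteq> {f. inKG G f}" and Ls: "is_subspace k0 kg_smult L"
  shows "\<exists>B. B \<subseteq> L \<and> graded_indep v G r n \<pi> c\<pi> d e0 B \<and> fam_indep k0 kg_smult B id
              \<and> fam_span k0 kg_smult B id = L"
proof -
  interpret kgm: fmod k0 kg_smult by (rule fmod_kg[OF sub_k0])
  define P where "P c = (\<exists>B. B \<subseteq> L \<and> graded_indep v G r n \<pi> c\<pi> d e0 B \<and> card B = c)" for c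
  have P0: "P 0" unfolding P_def using gi_empty by (intro exI[of _ "{}"]) auto
  have Pb: "\<forall>c. P c \<longrightarrow> c \<le> e0 * n" unfolding P_def using gi_card by blast
  obtain cm where cm: "P cm" "\<forall>c. P c \<longrightarrow> c \<le> cm" using Nat.ex_has_greatest_nat[OF P0 Pb] by blast
  obtain B where B: "B \<subseteq> L" "graded_indep v G r n \<pi> c\<pi> d e0 B" "card B = cm" using cm(1) unfolding P_def by blast
  have fB: "finite B" using gi_card[OF B(2)] by blast
  have maxc: "\<not> (B' \<subseteq> L \<and> graded_indep v G r n \<pi> c\<pi> d e0 B' \<and> card B' > card B)" for B'
    using cm(2) B(3) unfolding P_def by (metis not_le)
  have ind: "fam_indep k0 kg_smult B id"
  proof (rule kgm.indep_full[OF fB])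
    fix a assume a: "\<forall>u\<in>B. a u \<in> k0" and s: "(\<Sum>u\<in>B. kg_smult (a u) (id u)) = 0"
    show "\<forall>u\<in>B. a u = 0"
    proof (rule ccontr)
      assume "\<not> (\<forall>u\<in>B. a u = 0)"
      then have nz: "\<exists>b\<in>B. a b \<noteq> 0" by blast
      have "(\<lambda>\<sigma>. \<Sum>b\<in>B. a b * b \<sigma>) \<noteq> 0"
        using part1[OF fB B(2) a nz refl refl refl] by blast
      moreover have "(\<lambda>\<sigma>. \<Sum>b\<in>B. a b * b \<sigma>) = 0" using s kg_sum[of a B] by simp
      ultimately show False by simp
    qed
  qed
  have spL: "fam_span k0 kg_smult B id \<subseteq> L"
  proof
    fix h assume "h \<in> fam_span k0 kg_smult B id"
    then obtain c where c: "\<forall>b\<in>B. c b \<in> k0" "h = (\<Sum>b\<in>B. kg_smult (c b) (id b))"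
      using kgm.span_repr[OF fB] by blast
    show "h \<in> L" unfolding c(2) using sub_sum[OF Ls, of B c id] c(1) B(1) by auto
  qed
  have Lsp: "L \<subseteq> fam_span k0 kg_smult B id"
  proof
    fix f assume fL: "f \<in> L"
    show "f \<in> fam_span k0 kg_smult B id"
    proof (rule ccontr)
      assume nsp: "f \<notin> fam_span k0 kg_smult B id"
      have fK: "inKG G f" using fL LK by blast
      obtain N0 where N0: "\<forall>h\<in>fam_span k0 kg_smult B id. (\<lambda>\<sigma>. f \<sigma> - h \<sigma>) \<notin> Cset v G N0"
        using bounded_dist[OF fB B(2) fK nsp] by blast
      define Q where "Q N = (\<exists>h\<in>fam_span k0 kg_smult B id. (\<lambda>\<sigma>. f \<sigma> - h \<sigma>) \<in> Cset v G (N + d))" for N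
      obtain i1 where i1: "f \<in> Cset v G i1" using Cset_exists[OF fK] by blast
      have Q1: "Q (i1 - d)" unfolding Q_def using i1 kgm.span_zero by (intro bexI[of _ 0]) auto
      have Qb: "Q N \<Longrightarrow> N < N0 - d" for N
      proof (rule ccontr)
        assume "Q N" "\<not> N < N0 - d"
        then obtain h where "h \<in> fam_span k0 kg_smult B id" "(\<lambda>\<sigma>. f \<sigma> - h \<sigma>) \<in> Cset v G (N + d)"
          unfolding Q_def by blast
        moreover have "N0 \<le> N + d" using \<open>\<not> N < N0 - d\<close> by simp
        ultimately show False using N0 Cset_mono by blast
      qed
      define S where "S = {N. i1 - d \<le> N \<and> N \<le> N0 - d \<and> Q N}"
      have fS: "finite S" unfolding S_def by (rule finite_subset[of _ "{i1 - d..N0 - d}"]) auto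
      have Q1S: "i1 - d \<in> S" unfolding S_def using Q1 Qb[OF Q1] by simp
      define Nm where "Nm = Max S"
      have NmS: "Nm \<in> S" unfolding Nm_def using fS Q1S by (intro Max_in) auto
      have QNm: "Q Nm" using NmS unfolding S_def by blast
      have nQ: "\<not> Q (Nm + 1)"
      proof
        assume q: "Q (Nm + 1)"
        then have "Nm + 1 \<in> S" using NmS Qb[OF q] unfolding S_def by simp
        then have "Nm + 1 \<le> Nm" unfolding Nm_def using fS by (intro Max_ge) auto
        then show False by simp
      qed
      obtain hs where hs: "hs \<in> fam_span k0 kg_smult B id" "(\<lambda>\<sigma>. f \<sigma> - hs \<sigma>) \<in> Cset v G (Nm + d)"
        using QNm unfolding Q_def by blast
      define g where "g = (\<lambda>\<sigma>. f \<sigma> - hs \<sigma>)"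
      have gC: "g \<in> Cset v G (Nm + d)" using hs unfolding g_def by simp
      have gC1: "g \<notin> Cset v G (Nm + d + 1)"
      proof
        assume "g \<in> Cset v G (Nm + d + 1)"
        then have "Q (Nm + 1)" unfolding Q_def g_def using hs(1) by (auto simp: algebra_simps)
        then show False using nQ by simp
      qed
      have gK: "inKG G g" using Cset_inKG[OF gC] .
      have g0: "g \<noteq> (\<lambda>\<sigma>. 0)" using gC1 Cset_zero by auto
      have dg: "dv g = Nm" using dval_eqI[OF gK gC gC1] .
      have hsL: "hs \<in> L" using hs(1) spL by blast
      have gL: "g \<in> L"
      proof -
        have m1: "- 1 \<in> k0" using sub_k0 by (simp add: subf_uminus subf_1)
        have "kg_smult (- 1) hs \<in> L" using Ls hsL m1 unfolding is_subspace_def by blast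
        then have "f + kg_smult (- 1) hs \<in> L" using Ls fL unfolding is_subspace_def by blast
        moreover have "f + kg_smult (- 1) hs = g" unfolding g_def kg_smult_def by (simp add: fun_eq_iff)
        ultimately show ?thesis by simp
      qed
      have gB: "g \<notin> B"
      proof
        assume "g \<in> B"
        then have "g \<in> fam_span k0 kg_smult B id" using kgm.span_base[of g B id] by simp
        then have "g + hs \<in> fam_span k0 kg_smult B id" using kgm.span_add hs(1) by blast
        moreover have "g + hs = f" unfolding g_def by (simp add: fun_eq_iff)
        ultimately show False using nsp by simp
      qed
      show False
      proof (cases "fp g \<in> fam_span UNIV smult {b\<in>B. dv b mod int e0 = dv g mod int e0} fp")
        case True
        obtain h' where h': "h' \<in> fam_span k0 kg_smult B id" "(\<lambda>\<sigma>. g \<sigma> - h' \<sigma>) \<in> Cset v G (Nm + d + 1)"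
          using improve[OF fB B(2) gK gC gC1 True] by blast
        have "hs + h' \<in> fam_span k0 kg_smult B id" using kgm.span_add hs(1) h'(1) by blast
        moreover have "(\<lambda>\<sigma>. f \<sigma> - (hs + h') \<sigma>) = (\<lambda>\<sigma>. g \<sigma> - h' \<sigma>)" unfolding g_def by (simp add: fun_eq_iff)
        ultimately have "Q (Nm + 1)" unfolding Q_def using h'(2) by (metis add.assoc add.commute)
        then show False using nQ by simp
      next
        case False
        have "graded_indep v G r n \<pi> c\<pi> d e0 (insert g B)" by (rule gi_insert[OF B(2) gK g0 gB False])
        moreover have "insert g B \<subseteq> L" using gL B(1) by blast
        moreover have "card (insert g B) > card B" using fB gB by simp
        ultimately show False using maxc by blast
      qed
    qed
  qed
  show ?thesis using B(1,2) ind spL Lsp by blast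
qed

end


theorem proposition4p1p2:
  fixes v :: "'K::field \<Rightarrow> int" and k k0 :: "'K set" and G :: "('K \<Rightarrow> 'K) set"
    and r :: "'K \<Rightarrow> 'r::field" and \<pi> \<pi>0 c\<pi> :: 'K and n e0 :: nat and d :: int
  assumes dv: "discrete_val v" and complK: "v_complete v UNIV"
    and sub_k: "is_subfield k" and sub_k0: "is_subfield k0" and k0k: "k0 \<subseteq> k"
    and compl_k: "v_complete v k" and compl_k0: "v_complete v k0"
    and fin_Kk: "\<exists>m. is_ext_deg k UNIV m" and fin_kk0: "\<exists>m. is_ext_deg k0 k m"
    and n_def: "n = ext_deg k UNIV"
    and G_def: "G = galois_group k" and galois: "card G = n"
    and totram_Kk: "v ` (k - {0}) = {int n * z | z. True}"
    and totram_kk0: "v ` (k0 - {0}) = {int (ext_deg k0 k) * int n * z | z. True}"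
    and e0_def: "e0 = ext_deg k0 UNIV"
    and res: "is_residue_map v r"
    and unif: "\<pi> \<noteq> 0" "v \<pi> = 1"
    and unif0: "\<pi>0 \<in> k0" "\<pi>0 \<noteq> 0" "v \<pi>0 > 0" "\<forall>x\<in>k0 - {0}. v x > 0 \<longrightarrow> v \<pi>0 \<le> v x"
    and d_def: "d = diff_val v G k - int n + 1"
    and c\<pi>_def: "c\<pi> = trace G (\<pi> powi (- d))"
  shows
   "(\<forall>B c. finite B \<and> graded_indep v G r n \<pi> c\<pi> d e0 B \<and> (\<forall>b\<in>B. c b \<in> k0) \<and> (\<exists>b\<in>B. c b \<noteq> 0) \<longrightarrow>
      (let m = Min {v (c b) + dval v G d b | b. b \<in> B \<and> c b \<noteq> 0};
           f = (\<lambda>\<sigma>. \<Sum>b\<in>B. c b * b \<sigma>);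
           S = {b\<in>B. c b \<noteq> 0 \<and> v (c b) + dval v G d b = m}
       in f \<noteq> 0 \<and> dval v G d f = m \<and>
          (\<exists>lam. (\<forall>b\<in>S. lam b \<noteq> 0) \<and>
             frakp v G r n \<pi> c\<pi> d f = (\<Sum>b\<in>S. smult (lam b) (frakp v G r n \<pi> c\<pi> d b)))))
    \<and> (\<forall>B i. finite B \<and> graded_indep v G r n \<pi> c\<pi> d e0 B \<longrightarrow>
         Cset v G i \<inter> fam_span k0 kg_smult B id =
         {(\<lambda>\<sigma>. \<Sum>b\<in>B. c b * b \<sigma>) | c. \<forall>b\<in>B. \<exists>y\<in>val_ring v \<inter> k0.
             c b = \<pi>0 powi ((i - d - dval v G d b - 1) div int e0 + 1) * y})
    \<and> (\<forall>L. L \<subseteq> {f. inKG G f} \<and> is_subspace k0 kg_smult L \<longrightarrow>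
         (\<exists>B. B \<subseteq> L \<and> graded_indep v G r n \<pi> c\<pi> d e0 B \<and> fam_indep k0 kg_smult B id
              \<and> fam_span k0 kg_smult B id = L))"
proof -
  interpret S: setting v k k0 G r \<pi> \<pi>0 c\<pi> n e0 d
    unfolding setting_def setting_axioms_def dvf_def using assms by blast
  have I: "\<forall>B c. finite B \<and> graded_indep v G r n \<pi> c\<pi> d e0 B \<and> (\<forall>b\<in>B. c b \<in> k0) \<and> (\<exists>b\<in>B. c b \<noteq> 0) \<longrightarrow>
      (let m = Min {v (c b) + dval v G d b | b. b \<in> B \<and> c b \<noteq> 0};
           f = (\<lambda>\<sigma>. \<Sum>b\<in>B. c b * b \<sigma>);
           S = {b\<in>B. c b \<noteq> 0 \<and> v (c b) + dval v G d b = m}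
       in f \<noteq> 0 \<and> dval v G d f = m \<and>
          (\<exists>lam. (\<forall>b\<in>S. lam b \<noteq> 0) \<and>
             frakp v G r n \<pi> c\<pi> d f = (\<Sum>b\<in>S. smult (lam b) (frakp v G r n \<pi> c\<pi> d b))))"
  proof (intro allI impI)
    fix B c
    assume h: "finite B \<and> graded_indep v G r n \<pi> c\<pi> d e0 B \<and> (\<forall>b\<in>B. c b \<in> k0) \<and> (\<exists>b\<in>B. c b \<noteq> 0)"
    show "let m = Min {v (c b) + dval v G d b | b. b \<in> B \<and> c b \<noteq> 0};
           f = (\<lambda>\<sigma>. \<Sum>b\<in>B. c b * b \<sigma>);
           S = {b\<in>B. c b \<noteq> 0 \<and> v (c b) + dval v G d b = m}
       in f \<noteq> 0 \<and> dval v G d f = m \<and>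
          (\<exists>lam. (\<forall>b\<in>S. lam b \<noteq> 0) \<and>
             frakp v G r n \<pi> c\<pi> d f = (\<Sum>b\<in>S. smult (lam b) (frakp v G r n \<pi> c\<pi> d b)))"
      unfolding Let_def using S.part1[OF _ _ _ _ refl refl refl] h by blast
  qed
  have II: "\<forall>B i. finite B \<and> graded_indep v G r n \<pi> c\<pi> d e0 B \<longrightarrow>
         Cset v G i \<inter> fam_span k0 kg_smult B id =
         {(\<lambda>\<sigma>. \<Sum>b\<in>B. c b * b \<sigma>) | c. \<forall>b\<in>B. \<exists>y\<in>val_ring v \<inter> k0.
             c b = \<pi>0 powi ((i - d - dval v G d b - 1) div int e0 + 1) * y}"
    using S.part2 by blast
  have III: "\<forall>L. L \<subseteq> {f. inKG G f} \<and> is_subspace k0 kg_smult L \<longrightarrow>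
         (\<exists>B. B \<subseteq> L \<and> graded_indep v G r n \<pi> c\<pi> d e0 B \<and> fam_indep k0 kg_smult B id
              \<and> fam_span k0 kg_smult B id = L)"
    using S.part3 by blast
  show ?thesis using I II III by blast
qed


end
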